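(* Let $q\geqslant 3$ be a prime power and $s\in\mathbb{Z}_{\geqslant 1}$. Then the non-fixed c-Wieferich primes in $\mathbb{F}_q[T]$ of degree $s$ are precisely the monic irreducible factors over $\mathbb{F}_q$ of the polynomials $R_{q,s,\alpha}=\prod_{i=1}^s(T^q-T-\alpha^{q^i})$ for $\alpha\in B_{q,s,0}$.
   Context: Carlitz module: for $N\in\mathbb{F}_q[T]$, $\rho_N(X)$ is the additive polynomial determined by requiring $N\mapsto\rho_N$ to be an $\mathbb{F}_q$-algebra homomorphism from $\mathbb{F}_q[T]$ to the ring of additive polynomials (multiplication = composition) with $\rho_T(X)=X^q+TX$. A monic irreducible $\mathcal{P}\in\mathbb{F}_q[T]$ is a c-Wieferich prime if $\rho_{\mathcal{P}-1}(1)\equiv0\pmod{\mathcal{P}^2}$ (known to be equivalent to $F_{\deg\mathcal{P}-1}\equiv0\pmod{\mathcal{P}}$), where $F_0=1$, $F_i=(-1)^i+(T^{q^i}-T)F_{i-1}$. A polynomial $f\in\mathbb{F}_q[T]$ is non-fixed if $f(T+a)=f(T)$ holds only for $a=0\in\mathbb{F}_q$. $B_{q,s,0}$ is the set of equivalence classes (under $\theta_1\sim\theta_2$ iff $\theta_1^{q^i}=\theta_2$ for some $i\geqslant0$) of elements $\alpha\in\mathbb{F}_{q^s}$ of degree $s$ over $\mathbb{F}_q$ with $\mathrm{Tr}_{\mathbb{F}_{q^s}/\mathbb{F}_q}(\alpha)=0$ and $F_{s-1}\equiv0\pmod{T^q-T-\alpha}$ in $\mathbb{F}_{q^s}[T]$.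 *)

theory Defs
  imports "HOL-Computational_Algebra.Polynomial_Factorial" "HOL-Library.Cardinality"
begin

fun Fseq :: "nat \<Rightarrow> nat \<Rightarrow> 'a::comm_ring_1 poly" where
  "Fseq q 0 = 1"
| "Fseq q (Suc i) = (-1) ^ Suc i + (monom 1 (q ^ Suc i) - monom 1 1) * Fseq q i"

definition carlitz_T :: "nat \<Rightarrow> 'a::comm_ring_1 poly \<Rightarrow> 'a poly" where
  "carlitz_T q a = a ^ q + monom 1 1 * a"

definition carlitz :: "nat \<Rightarrow> 'a::comm_ring_1 poly \<Rightarrow> 'a poly \<Rightarrow> 'a poly" where
  "carlitz q N a = (\<Sum>i\<le>degree N. smult (coeff N i) ((carlitz_T q ^^ i) a))"

definition c_wieferich :: "'k::{finite,field} poly \<Rightarrow> bool" where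
  "c_wieferich P \<longleftrightarrow> lead_coeff P = 1 \<and> irreducible P \<and>
     P ^ 2 dvd carlitz CARD('k) (P - 1) 1"

definition non_fixed :: "'a::comm_ring_1 poly \<Rightarrow> bool" where
  "non_fixed f \<longleftrightarrow> (\<forall>a. pcompose f [:a, 1:] = f \<longrightarrow> a = 0)"

definition is_field_hom :: "('k::field \<Rightarrow> 'L::field) \<Rightarrow> bool" where
  "is_field_hom \<phi> \<longleftrightarrow> \<phi> 1 = 1 \<and> (\<forall>x y. \<phi> (x + y) = \<phi> x + \<phi> y) \<and>
     (\<forall>x y. \<phi> (x * y) = \<phi> x * \<phi> y)"

definition alg_degree :: "('k::field \<Rightarrow> 'L::field) \<Rightarrow> 'L \<Rightarrow> nat" where
  "alg_degree \<phi> \<alpha> = (LEAST n. \<exists>p. p \<noteq> 0 \<and> degree p = n \<and> poly (map_poly \<phi> p) \<alpha> = 0)"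

definition trace_ext :: "nat \<Rightarrow> nat \<Rightarrow> 'L::comm_ring_1 \<Rightarrow> 'L" where
  "trace_ext q s \<alpha> = (\<Sum>i<s. \<alpha> ^ (q ^ i))"

definition frob_class :: "nat \<Rightarrow> 'L::comm_ring_1 \<Rightarrow> 'L set" where
  "frob_class q \<alpha> = {\<alpha> ^ (q ^ i) | i. True}"

definition B_set :: "('k::{finite,field} \<Rightarrow> 'L::{finite,field}) \<Rightarrow> nat \<Rightarrow> 'L set set" where
  "B_set \<phi> s = {frob_class CARD('k) \<alpha> | \<alpha>.
      alg_degree \<phi> \<alpha> = s \<and> trace_ext CARD('k) s \<alpha> = 0 \<and>
      (monom 1 CARD('k) - monom 1 1 - [:\<alpha>:]) dvd (Fseq CARD('k) (s - 1) :: 'L poly)}"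

definition R_poly :: "nat \<Rightarrow> nat \<Rightarrow> 'L::comm_ring_1 \<Rightarrow> 'L poly" where
  "R_poly q s \<alpha> = (\<Prod>i=1..s. monom 1 q - monom 1 1 - [:\<alpha> ^ (q ^ i):])"

end

theory Submission
  imports Defs "HOL-Library.FuncSet"
begin


definition hom :: "('a::comm_ring_1 \<Rightarrow> 'b::comm_ring_1) \<Rightarrow> bool" where
  "hom h \<longleftrightarrow> h 0 = 0 \<and> h 1 = 1 \<and> (\<forall>x y. h (x + y) = h x + h y) \<and> (\<forall>x y. h (x * y) = h x * h y)"

context
  fixes h :: "'a::comm_ring_1 \<Rightarrow> 'b::comm_ring_1"
  assumes h: "hom h"
begin

lemma hom_0[simp]: "h 0 = 0" using h by (simp add: hom_def)
lemma hom_1[simp]: "h 1 = 1" using h by (simp add: hom_def)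
lemma hom_add[simp]: "h (x + y) = h x + h y" using h by (simp add: hom_def)
lemma hom_mult[simp]: "h (x * y) = h x * h y" using h by (simp add: hom_def)
lemma hom_uminus[simp]: "h (- x) = - h x"
proof -
  have "h (- x) + h x = 0" by (metis hom_add hom_0 neg_eq_iff_add_eq_0 add.commute)
  then show ?thesis by (simp add: eq_neg_iff_add_eq_0)
qed
lemma hom_diff[simp]: "h (x - y) = h x - h y"
  using hom_add[of x "- y"] by simp
lemma hom_power[simp]: "h (x ^ n) = h x ^ n" by (induction n) auto
lemma hom_of_nat[simp]: "h (of_nat n) = of_nat n" by (induction n) auto
lemma hom_sum[simp]: "h (sum f A) = (\<Sum>x\<in>A. h (f x))"
  by (induction A rule: infinite_finite_induct) auto
lemma hom_prod[simp]: "h (prod f A) = (\<Prod>x\<in>A. h (f x))"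
  by (induction A rule: infinite_finite_induct) auto

lemma map_poly_add[simp]: "map_poly h (p + q) = map_poly h p + map_poly h q"
  by (rule poly_eqI) (simp add: coeff_map_poly)
lemma map_poly_uminus[simp]: "map_poly h (- p) = - map_poly h p"
  by (rule poly_eqI) (simp add: coeff_map_poly)
lemma map_poly_diff[simp]: "map_poly h (p - q) = map_poly h p - map_poly h q"
  by (rule poly_eqI) (simp add: coeff_map_poly)
lemma map_poly_const[simp]: "map_poly h [:c:] = [:h c:]"
  by (rule poly_eqI) (simp add: coeff_map_poly coeff_pCons split: nat.splits)
lemma map_poly_smult'[simp]: "map_poly h (smult c p) = smult (h c) (map_poly h p)"
  by (rule map_poly_smult) auto
lemma map_poly_pCons'[simp]: "map_poly h (pCons c p) = pCons (h c) (map_poly h p)"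
  by (rule map_poly_pCons) auto
lemma map_poly_mult[simp]: "map_poly h (p * q) = map_poly h p * map_poly h q"
  by (induction p) (auto simp: algebra_simps)
lemma map_poly_one[simp]: "map_poly h 1 = 1" by simp
lemma map_poly_power[simp]: "map_poly h (p ^ n) = map_poly h p ^ n"
  by (induction n) auto
lemma map_poly_monom'[simp]: "map_poly h (monom c n) = monom (h c) n"
  by (rule map_poly_monom) auto
lemma map_poly_sum[simp]: "map_poly h (sum f A) = (\<Sum>x\<in>A. map_poly h (f x))"
  by (induction A rule: infinite_finite_induct) auto
lemma map_poly_prod[simp]: "map_poly h (prod f A) = (\<Prod>x\<in>A. map_poly h (f x))"
  by (induction A rule: infinite_finite_induct) auto
lemma map_poly_of_nat[simp]: "map_poly h (of_nat n) = of_nat n"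
  by (simp add: of_nat_poly)
lemma poly_map_poly_hom: "poly (map_poly h p) (h x) = h (poly p x)"
  by (induction p) auto
lemma map_poly_pcompose: "map_poly h (pcompose p r) = pcompose (map_poly h p) (map_poly h r)"
  by (induction p) (auto simp: pcompose_pCons)
lemma map_poly_dvd: "p dvd r \<Longrightarrow> map_poly h p dvd map_poly h r"
  by (auto simp: dvd_def)
lemma hom_neg_one_power[simp]: "map_poly h ((-1) ^ n) = (-1) ^ n"
  by simp

end

lemma map_poly_pderiv:
  fixes h :: "'a::field \<Rightarrow> 'b::field"
  assumes "hom h" shows "map_poly h (pderiv p) = pderiv (map_poly h p)"
  by (rule poly_eqI) (simp add: coeff_map_poly coeff_pderiv assms)

lemma hom_inj_field:
  fixes h :: "'a::field \<Rightarrow> 'b::field"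
  assumes "hom h" shows "inj h"
proof (rule injI)
  fix x y assume "h x = h y"
  then have "h (x - y) = 0" using assms by simp
  show "x = y"
  proof (rule ccontr)
    assume "x \<noteq> y"
    then have "h ((x - y) * inverse (x - y)) = 1" using assms by simp
    with \<open>h (x - y) = 0\<close> show False using assms by simp
  qed
qed

lemma hom_eq0_iff:
  fixes h :: "'a::field \<Rightarrow> 'b::field"
  assumes "hom h" shows "h x = 0 \<longleftrightarrow> x = 0"
  using hom_inj_field[OF assms] assms by (metis hom_0 injD)

lemma degree_map_poly_hom:
  fixes h :: "'a::field \<Rightarrow> 'b::field"
  assumes "hom h" shows "degree (map_poly h p) = degree p"
  by (rule degree_map_poly) (simp add: hom_eq0_iff[OF assms])

lemma lead_coeff_map_poly_hom:
  fixes h :: "'a::field \<Rightarrow> 'b::field"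
  assumes "hom h" shows "lead_coeff (map_poly h p) = h (lead_coeff p)"
  using assms by (simp add: degree_map_poly_hom coeff_map_poly)

lemma map_poly_eq0_hom:
  fixes h :: "'a::field \<Rightarrow> 'b::field"
  assumes "hom h" shows "map_poly h p = 0 \<longleftrightarrow> p = 0"
  using assms by (simp add: map_poly_eq_0_iff hom_eq0_iff)

lemma map_poly_dvd_iff:
  fixes h :: "'a::field \<Rightarrow> 'b::field"
  assumes "hom h" shows "map_poly h p dvd map_poly h r \<longleftrightarrow> p dvd r"
proof
  assume d: "map_poly h p dvd map_poly h r"
  show "p dvd r"
  proof (cases "p = 0")
    case True
    then show ?thesis using d assms by (simp add: map_poly_eq0_hom)
  next
    case False
    have e: "r = p * (r div p) + r mod p" by simp
    have "map_poly h r = map_poly h p * map_poly h (r div p) + map_poly h (r mod p)"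
      using assms by (metis e map_poly_add map_poly_mult)
    then have "map_poly h p dvd map_poly h (r mod p)" using d
      by (metis dvd_add_right_iff dvd_triv_left)
    moreover have "degree (map_poly h (r mod p)) < degree (map_poly h p) \<or> r mod p = 0"
      using degree_mod_less[OF False, of r] assms by (auto simp: degree_map_poly_hom)
    ultimately have "r mod p = 0"
      using assms False
      by (metis degree_map_poly_hom dvd_imp_degree_le map_poly_eq0_hom not_le)
    then show ?thesis by (simp add: mod_eq_0_iff_dvd)
  qed
qed (rule map_poly_dvd[OF assms])


lemma ff_power_card:
  fixes x :: "'a::{finite,field}"
  shows "x ^ CARD('a) = x"
proof (cases "x = 0")
  case False
  have "x * (\<Prod>y\<in>UNIV-{0}. x * y) = x * x ^ (card (UNIV :: 'a set) - 1) * \<Prod>(UNIV-{0})"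
    by (simp add: prod.distrib mult_ac)
  also have "x * x ^ (card (UNIV :: 'a set) - 1) = x ^ Suc (card (UNIV :: 'a set) - 1)"
    by (subst power_Suc) auto
  also have "Suc (card (UNIV :: 'a set) - 1) = card (UNIV :: 'a set)"
    using finite_UNIV_card_ge_0[where ?'a = 'a] by simp
  also have "(\<Prod>y\<in>UNIV-{0}. x * y) = (\<Prod>y\<in>UNIV-{0}. y)"
    by (rule prod.reindex_bij_witness[of _ "\<lambda>y. y / x" "\<lambda>y. x * y"]) (use False in auto)
  finally show ?thesis
    by simp
qed (use finite_UNIV_card_ge_0[where ?'a = 'a] in auto)

lemma ff_card_ge2: "CARD('a::{finite,field}) \<ge> 2"
proof -
  have "card {0::'a, 1} \<le> CARD('a)" by (rule card_mono) auto
  then show ?thesis by simp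
qed

lemma ff_choose_zero:
  fixes dummy :: "'a::{finite,field}"
  assumes "0 < i" "i < CARD('a)"
  shows "of_nat (CARD('a) choose i) = (0::'a)"
proof -
  define n where "n = CARD('a)"
  define g :: "'a poly" where "g = [:1,1:] ^ n - monom 1 n - 1"
  have n2: "n \<ge> 2" unfolding n_def by (rule ff_card_ge2)
  have cg: "coeff g j = (if j = 0 \<or> j \<ge> n then 0 else of_nat (n choose j))" for j
  proof (cases "j \<le> n")
    case True
    then show ?thesis using n2 unfolding g_def
      by (auto simp: coeff_linear_poly_power coeff_monom)
  next
    case False
    then have "coeff ([:1,1:] ^ n) j = (0::'a)"
      by (intro coeff_eq_0) (simp add: degree_power_eq)
    then show ?thesis using False unfolding g_def by (auto simp: coeff_monom)
  qed
  have "g = 0"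
  proof (rule ccontr)
    assume "g \<noteq> 0"
    have "degree g < n"
      using n2 by (intro degree_lessI) (auto simp: cg)
    moreover have "{x. poly g x = 0} = UNIV"
      by (auto simp: g_def poly_monom n_def ff_power_card)
    ultimately show False using card_poly_roots_bound[OF \<open>g \<noteq> 0\<close>] n_def by simp
  qed
  then have "coeff g i = 0" by simp
  then show ?thesis using assms by (simp add: cg n_def)
qed

lemma frob_add_gen:
  fixes x y :: "'b::comm_ring_1"
  assumes "\<And>i. 0 < i \<Longrightarrow> i < n \<Longrightarrow> of_nat (n choose i) = (0::'b)" "n > 0"
  shows "(x + y) ^ n = x ^ n + y ^ n"
proof -
  have "(x + y) ^ n = (\<Sum>k\<le>n. of_nat (n choose k) * x ^ k * y ^ (n - k))"
    by (rule binomial_ring)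
  also have "\<dots> = (\<Sum>k\<in>{0,n}. of_nat (n choose k) * x ^ k * y ^ (n - k))"
    by (intro sum.mono_neutral_right) (use assms in auto)
  finally show ?thesis using assms(2) by (simp add: add.commute)
qed

locale ctx =
  fixes \<phi> :: "'k::{finite,field} \<Rightarrow> 'L::{finite,field}" and s :: nat
  assumes hphi: "hom \<phi>" and s1: "s \<ge> 1" and cardL: "CARD('L) = CARD('k) ^ s"
begin

lemma q2: "CARD('k) \<ge> 2" by (rule ff_card_ge2)

lemma phi_of_nat: "\<phi> (of_nat n) = of_nat n" using hphi by simp

lemma chooseL: "0 < i \<Longrightarrow> i < CARD('k) \<Longrightarrow> of_nat (CARD('k) choose i) = (0::'L)"
  using ff_choose_zero[of i] phi_of_nat hphi by (metis hom_0)

lemma frobL_add: "((x::'L) + y) ^ CARD('k) = x ^ CARD('k) + y ^ CARD('k)"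
  using chooseL q2 by (intro frob_add_gen) auto

lemma frobk_add: "((x::'k) + y) ^ CARD('k) = x ^ CARD('k) + y ^ CARD('k)"
  by (simp add: ff_power_card)

lemma of_nat_q_k: "of_nat CARD('k) = (0::'k)"
  using ff_choose_zero[of 1, where 'a='k] q2 by simp

lemma hom_frob: "hom (\<lambda>x::'L. x ^ (CARD('k) ^ n))"
proof (induction n)
  case 0 then show ?case by (simp add: hom_def)
next
  case (Suc n)
  have eq: "(\<lambda>x::'L. x ^ (CARD('k) ^ Suc n)) = (\<lambda>x. (x ^ (CARD('k) ^ n)) ^ CARD('k))"
    by (rule ext) (metis power_Suc2 power_mult)
  show ?case using Suc unfolding eq hom_def by (simp add: frobL_add power_mult_distrib)
qed

lemma hom_frob1: "hom (\<lambda>x::'L. x ^ CARD('k))"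
  using hom_frob[of 1] by simp

lemma frob_add_n: "((x::'L) + y) ^ (CARD('k) ^ n) = x ^ (CARD('k) ^ n) + y ^ (CARD('k) ^ n)"
  using hom_add[OF hom_frob] by blast

lemma frob_diff_n: "((x::'L) - y) ^ (CARD('k) ^ n) = x ^ (CARD('k) ^ n) - y ^ (CARD('k) ^ n)"
  using hom_diff[OF hom_frob] by blast

lemma frob_sum_n: "(sum f A :: 'L) ^ (CARD('k) ^ n) = (\<Sum>x\<in>A. f x ^ (CARD('k) ^ n))"
  using hom_sum[OF hom_frob] by blast

lemma frob_inj: "inj (\<lambda>x::'L. x ^ (CARD('k) ^ n))"
  by (rule hom_inj_field[OF hom_frob])

lemma frob_inj_eq: "(x::'L) ^ (CARD('k) ^ n) = y ^ (CARD('k) ^ n) \<longleftrightarrow> x = y"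
  using frob_inj[of n] by (auto dest: injD)

lemma powL: "(x::'L) ^ (CARD('k) ^ s) = x"
  using ff_power_card[of x] cardL by simp

lemma powk: "(c::'k) ^ CARD('k) = c"
  by (rule ff_power_card)

lemma pow_pow: "((x::'L) ^ (CARD('k) ^ i)) ^ (CARD('k) ^ j) = x ^ (CARD('k) ^ (i + j))"
  by (simp add: power_mult[symmetric] power_add)

lemma phi_inj: "inj \<phi>" by (rule hom_inj_field[OF hphi])

lemma phi_frob: "\<phi> c ^ (CARD('k) ^ n) = \<phi> c"
proof (induction n)
  case (Suc n)
  have "\<phi> c ^ (CARD('k) ^ Suc n) = (\<phi> c ^ CARD('k)) ^ (CARD('k) ^ n)"
    by (simp add: power_mult[symmetric] mult.commute)
  also have "\<phi> c ^ CARD('k) = \<phi> c" using hphi powk by (metis hom_power)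
  finally show ?case using Suc by simp
qed simp

lemma range_phi: "(x::'L) \<in> range \<phi> \<longleftrightarrow> x ^ CARD('k) = x"
proof
  assume "x \<in> range \<phi>" then show "x ^ CARD('k) = x" using phi_frob[of _ 1] by auto
next
  assume x: "x ^ CARD('k) = x"
  define g :: "'L poly" where "g = monom 1 CARD('k) - monom 1 1"
  have dg: "degree g = CARD('k)" using q2 unfolding g_def
    using degree_add_eq_left[of "- monom (1::'L) 1" "monom 1 CARD('k)"]
    by (auto simp: degree_monom_eq)
  then have "g \<noteq> 0" using q2 by auto
  have sub: "insert x (range \<phi>) \<subseteq> {x. poly g x = 0}"
    using x phi_frob[of _ 1] by (auto simp: g_def poly_monom)
  show "x \<in> range \<phi>"
  proof (rule ccontr)
    assume "x \<notin> range \<phi>"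
    then have "card (insert x (range \<phi>)) = Suc CARD('k)"
      using card_image[OF phi_inj] by simp
    moreover have "card (insert x (range \<phi>)) \<le> card {x. poly g x = 0}"
      by (rule card_mono[OF poly_roots_finite[OF \<open>g \<noteq> 0\<close>] sub])
    ultimately show False using card_poly_roots_bound[OF \<open>g \<noteq> 0\<close>] dg by simp
  qed
qed

end


lemma cyc_shift:
  fixes f :: "nat \<Rightarrow> 'a::idom"
  assumes "f m = f 0" "f 0 \<noteq> 0"
  shows "(\<Prod>i<m. f (Suc i)) = (\<Prod>i<m. f i)"
proof -
  have "f 0 * (\<Prod>i<m. f (Suc i)) = (\<Prod>i<Suc m. f i)" by (simp only: prod.lessThan_Suc_shift)
  also have "\<dots> = f 0 * (\<Prod>i<m. f i)" by (simp add: assms(1) mult.commute)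
  finally show ?thesis using assms(2) by simp
qed

lemma prod_1_m_shift: "(\<Prod>i=1..m. f i) = (\<Prod>i<m. f (Suc i))"
proof -
  have "{1..m} = Suc ` {..<m}" by (simp add: image_Suc_lessThan)
  then show ?thesis by (simp add: prod.reindex)
qed

lemma root_of_dvd_prod:
  fixes p :: "'a::field poly"
  assumes "finite I" "p dvd (\<Prod>i\<in>I. [:- r i, 1:])" "degree p > 0"
  shows "\<exists>i\<in>I. poly p (r i) = 0"
  using assms
proof (induction I rule: finite_induct)
  case empty
  then have "is_unit p" by simp
  then show ?case using empty by (simp add: is_unit_poly_iff) (metis degree_pCons_0 less_irrefl)
next
  case (insert i I)
  show ?case
  proof (cases "poly p (r i) = 0")
    case True then show ?thesis by auto
  next
    case False
    then have nd: "\<not> [:- r i, 1:] dvd p" by (simp add: poly_eq_0_iff_dvd)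
    have pr: "prime_elem [:- r i, 1:]" by (rule prime_elem_linear_field_poly) simp
    obtain k where k: "[:- r i, 1:] * (\<Prod>i\<in>I. [:- r i, 1:]) = p * k"
      using insert by (auto simp: dvd_def)
    then have "[:- r i, 1:] dvd p * k" by (metis dvd_triv_left)
    then have "[:- r i, 1:] dvd k" using nd pr by (simp add: prime_elem_dvd_mult_iff)
    then obtain k' where k': "k = [:- r i, 1:] * k'" by (auto simp: dvd_def)
    have "[:- r i, 1:] * (\<Prod>i\<in>I. [:- r i, 1:]) = [:- r i, 1:] * (p * k')"
      using k unfolding k' by (metis mult.left_commute)
    moreover have "[:- r i, 1:] \<noteq> 0" by simp
    ultimately have "(\<Prod>i\<in>I. [:- r i, 1:]) = p * k'"
      by (metis mult_left_cancel)
    then have "p dvd (\<Prod>i\<in>I. [:- r i, 1:])" by simp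
    then show ?thesis using insert by auto
  qed
qed

lemma prod_dvd_of_roots:
  fixes p :: "'a::field poly"
  assumes "finite S" "\<And>x. x \<in> S \<Longrightarrow> poly p x = 0"
  shows "(\<Prod>x\<in>S. [:- x, 1:]) dvd p"
  using assms
proof (induction S arbitrary: p rule: finite_induct)
  case empty then show ?case by simp
next
  case (insert x S)
  then have "[:- x, 1:] dvd p" by (simp add: poly_eq_0_iff_dvd)
  then obtain p' where p': "p = [:- x, 1:] * p'" by (auto simp: dvd_def)
  have "poly p' y = 0" if "y \<in> S" for y
  proof -
    have "y \<noteq> x" using that insert by auto
    moreover have "poly p y = 0" using insert that by auto
    ultimately show ?thesis using p' by simp
  qed
  then have "(\<Prod>x\<in>S. [:- x, 1:]) dvd p'" using insert by auto
  moreover have "(\<Prod>x\<in>insert x S. [:- x, 1:]) = [:- x, 1:] * (\<Prod>x\<in>S. [:- x, 1:])"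
    using insert by simp
  ultimately show ?case using p' by (metis mult_dvd_mono dvd_refl)
qed

lemma monic_dvd_eq:
  fixes P Q :: "'a::field poly"
  assumes "lead_coeff P = 1" "lead_coeff Q = 1" "degree P = degree Q" "P dvd Q"
  shows "P = Q"
proof -
  obtain r where r: "Q = P * r" using assms(4) by (auto simp: dvd_def)
  have "Q \<noteq> 0" using assms(2) by auto
  then have "r \<noteq> 0" "P \<noteq> 0" using r by auto
  then have "degree Q = degree P + degree r" using r by (simp add: degree_mult_eq)
  then have "degree r = 0" using assms(3) by simp
  then obtain c where c: "r = [:c:]" by (auto elim: degree_eq_zeroE)
  have "lead_coeff Q = lead_coeff P * lead_coeff r" using r by (simp add: lead_coeff_mult)
  then have "c = 1" using assms c by simp
  then show ?thesis using r c by (simp add: one_pCons)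
qed

lemma monic_prod_linear: "lead_coeff (\<Prod>i\<in>A. [:- r i, 1::'a::field:]) = 1"
  by (simp add: lead_coeff_prod)

lemma degree_prod_linear: "finite A \<Longrightarrow> degree (\<Prod>i\<in>A. [:- r i, 1::'a::field:]) = card A"
  by (simp add: degree_prod_eq_sum_degree)

context ctx begin

lemma fixed_coeffs:
  fixes p :: "'L poly"
  assumes "map_poly (\<lambda>x. x ^ CARD('k)) p = p"
  shows "\<exists>g. map_poly \<phi> g = p"
proof -
  have c: "coeff p i \<in> range \<phi>" for i
  proof -
    have "coeff (map_poly (\<lambda>x. x ^ CARD('k)) p) i = coeff p i ^ CARD('k)"
      using q2 by (simp add: coeff_map_poly)
    then show ?thesis using assms range_phi by simp
  qed
  have i0: "inv \<phi> 0 = 0" using phi_inj hphi by (metis hom_0 inv_f_f)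
  have "map_poly \<phi> (map_poly (inv \<phi>) p) = p"
    by (rule poly_eqI) (simp add: coeff_map_poly i0 hphi f_inv_into_f[OF c])
  then show ?thesis by blast
qed

lemma cyc_fixed:
  fixes G :: "'L \<Rightarrow> 'L poly"
  assumes "\<And>x. map_poly (\<lambda>y. y ^ CARD('k)) (G x) = G (x ^ CARD('k))" "\<And>x. G x \<noteq> 0"
    and "\<beta> ^ (CARD('k) ^ m) = \<beta>"
  shows "map_poly (\<lambda>y. y ^ CARD('k)) (\<Prod>i<m. G (\<beta> ^ (CARD('k) ^ i))) = (\<Prod>i<m. G (\<beta> ^ (CARD('k) ^ i)))"
proof -
  have "map_poly (\<lambda>y. y ^ CARD('k)) (\<Prod>i<m. G (\<beta> ^ (CARD('k) ^ i)))
        = (\<Prod>i<m. G (\<beta> ^ (CARD('k) ^ Suc i)))"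
    using hom_frob1 assms(1) by (simp add: pow_pow[of _ _ 1, simplified])
  also have "\<dots> = (\<Prod>i<m. G (\<beta> ^ (CARD('k) ^ i)))"
    by (rule cyc_shift[where f = "\<lambda>i. G (\<beta> ^ (CARD('k) ^ i))"]) (use assms in auto)
  finally show ?thesis .
qed

lemma cyc_poly:
  assumes "\<beta> ^ (CARD('k) ^ m) = (\<beta>::'L)"
  shows "\<exists>g. map_poly \<phi> g = (\<Prod>i<m. [:- (\<beta> ^ (CARD('k) ^ i)), 1:])"
proof (rule fixed_coeffs, rule cyc_fixed[OF _ _ assms])
  fix x :: 'L
  show "map_poly (\<lambda>y. y ^ CARD('k)) [:- x, 1:] = [:- (x ^ CARD('k)), 1:]"
    using hom_frob1 hom_uminus[OF hom_frob1, of x] by simp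
qed auto

lemma minpoly_dvd:
  assumes "irreducible P" "poly (map_poly \<phi> P) \<theta> = 0"
  shows "P dvd g \<longleftrightarrow> poly (map_poly \<phi> g) \<theta> = 0"
proof
  assume "P dvd g"
  then obtain r where "g = P * r" by (auto simp: dvd_def)
  then show "poly (map_poly \<phi> g) \<theta> = 0" using assms hphi by simp
next
  assume g: "poly (map_poly \<phi> g) \<theta> = 0"
  define I where "I = {m. m \<noteq> 0 \<and> poly (map_poly \<phi> m) \<theta> = 0}"
  have "P \<noteq> 0" using assms(1) by auto
  then have "P \<in> I" using assms by (simp add: I_def)
  define d where "d = (LEAST n. \<exists>m\<in>I. degree m = n)"
  have "\<exists>m\<in>I. degree m = d" unfolding d_def by (rule LeastI_ex) (use \<open>P \<in> I\<close> in blast)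
  then obtain m where m: "m \<in> I" "degree m = d" by blast
  have mindeg: "degree m \<le> degree r" if "r \<in> I" for r
    unfolding m(2) d_def by (rule Least_le) (use that in blast)
  have mdvd: "m dvd r" if r: "poly (map_poly \<phi> r) \<theta> = 0" for r
  proof (rule ccontr)
    assume nd: "\<not> m dvd r"
    have "m \<noteq> 0" using m by (simp add: I_def)
    have e: "r = m * (r div m) + r mod m" by simp
    have "poly (map_poly \<phi> r) \<theta> = poly (map_poly \<phi> m) \<theta> * poly (map_poly \<phi> (r div m)) \<theta> + poly (map_poly \<phi> (r mod m)) \<theta>"
      using hphi by (metis e map_poly_add map_poly_mult poly_add poly_mult)
    then have "poly (map_poly \<phi> (r mod m)) \<theta> = 0" using r m by (simp add: I_def)
    moreover have "r mod m \<noteq> 0" using nd by (simp add: mod_eq_0_iff_dvd)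
    ultimately have "r mod m \<in> I" by (simp add: I_def)
    then have "degree m \<le> degree (r mod m)" by (rule mindeg)
    moreover have "degree (r mod m) < degree m"
      using degree_mod_less[OF \<open>m \<noteq> 0\<close>, of r] \<open>r mod m \<noteq> 0\<close> by simp
    ultimately show False by simp
  qed
  then have "m dvd P" using assms(2) by blast
  then obtain c where c: "P = m * c" by (auto simp: dvd_def)
  have "\<not> is_unit m"
  proof
    assume "is_unit m"
    then obtain a where a0: "m = [:a:]" "a dvd 1" by (rule is_unit_polyE)
    then have a: "m = [:a:]" "a \<noteq> 0" by auto
    then have "poly (map_poly \<phi> m) \<theta> = \<phi> a" using hphi by simp
    then show False using m a hom_eq0_iff[OF hphi] by (simp add: I_def)
  qed
  then have "is_unit c" using assms(1) c by (auto dest: irreducibleD)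
  then have "P dvd m" using c by (metis dvd_mult_unit_iff dvd_refl)
  then show "P dvd g" using mdvd[OF g] by (rule dvd_trans)
qed

end


context ctx begin

lemma frob_fix_phi: "map_poly (\<lambda>x. x ^ (CARD('k) ^ n)) (map_poly \<phi> g) = map_poly \<phi> g"
proof -
  have "map_poly (\<lambda>x. x ^ (CARD('k) ^ n)) (map_poly \<phi> g) = map_poly ((\<lambda>x. x ^ (CARD('k) ^ n)) \<circ> \<phi>) g"
    using hphi q2 by (intro map_poly_map_poly) auto
  also have "(\<lambda>x. x ^ (CARD('k) ^ n)) \<circ> \<phi> = \<phi>" by (rule ext) (simp add: phi_frob)
  finally show ?thesis .
qed

lemma conj_root:
  assumes "poly (map_poly \<phi> g) \<theta> = 0"
  shows "poly (map_poly \<phi> g) (\<theta> ^ (CARD('k) ^ n)) = 0"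
proof -
  have "poly (map_poly (\<lambda>x. x ^ (CARD('k) ^ n)) (map_poly \<phi> g)) (\<theta> ^ (CARD('k) ^ n))
      = (poly (map_poly \<phi> g) \<theta>) ^ (CARD('k) ^ n)"
    using poly_map_poly_hom[OF hom_frob] by blast
  then show ?thesis using assms q2 by (simp add: frob_fix_phi)
qed

lemma degree_cyc: "degree (\<Prod>i<m. [:- (\<beta> ^ (CARD('k) ^ i)), 1::'L:]) = m"
  by (simp add: degree_prod_linear)

lemma distinct_conj:
  assumes "irreducible P" "poly (map_poly \<phi> P) \<theta> = 0" "0 < j" "j < degree P"
  shows "\<theta> ^ (CARD('k) ^ j) \<noteq> \<theta>"
proof
  assume e: "\<theta> ^ (CARD('k) ^ j) = \<theta>"
  obtain g where g: "map_poly \<phi> g = (\<Prod>i<j. [:- (\<theta> ^ (CARD('k) ^ i)), 1:])"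
    using cyc_poly[OF e] by blast
  have "poly (map_poly \<phi> g) \<theta> = 0" unfolding g poly_prod
    using assms(3) by (intro prod_zero) (auto intro!: bexI[of _ 0])
  then have "P dvd g" using minpoly_dvd[OF assms(1,2)] by blast
  moreover have "degree g = j" using g degree_cyc degree_map_poly_hom[OF hphi] by (simp add: degree_map_poly_hom[OF hphi, symmetric])
  moreover have "g \<noteq> 0" using g map_poly_eq0_hom[OF hphi]
    by (metis monic_prod_linear leading_coeff_0_iff zero_neq_one)
  ultimately show False using assms(4) by (metis dvd_imp_degree_le not_le)
qed

lemma conj_inj:
  assumes "\<And>j. 0 < j \<Longrightarrow> j < d \<Longrightarrow> (\<theta>::'L) ^ (CARD('k) ^ j) \<noteq> \<theta>"
  shows "inj_on (\<lambda>i. \<theta> ^ (CARD('k) ^ i)) {..<d}"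
proof -
  have *: "\<theta> ^ (CARD('k) ^ i) \<noteq> \<theta> ^ (CARD('k) ^ j)" if "i < j" "j < d" for i j
  proof
    assume "\<theta> ^ (CARD('k) ^ i) = \<theta> ^ (CARD('k) ^ j)"
    also have "\<theta> ^ (CARD('k) ^ j) = (\<theta> ^ (CARD('k) ^ (j - i))) ^ (CARD('k) ^ i)"
      using that by (simp add: pow_pow)
    finally have "\<theta> ^ (CARD('k) ^ (j - i)) = \<theta>" by (simp add: frob_inj_eq)
    then show False using assms[of "j - i"] that by simp
  qed
  show ?thesis
    by (rule inj_onI) (metis * lessThan_iff linorder_neqE_nat)
qed

lemma P_factor:
  assumes "irreducible P" "lead_coeff P = 1" "poly (map_poly \<phi> P) \<theta> = 0"
  shows "map_poly \<phi> P = (\<Prod>i<degree P. [:- (\<theta> ^ (CARD('k) ^ i)), 1:])"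
    and "\<theta> ^ (CARD('k) ^ degree P) = \<theta>"
proof -
  define d where "d = degree P"
  have inj: "inj_on (\<lambda>i. \<theta> ^ (CARD('k) ^ i)) {..<d}"
    using distinct_conj[OF assms(1,3)] unfolding d_def by (intro conj_inj) auto
  let ?A = "(\<lambda>i. \<theta> ^ (CARD('k) ^ i)) ` {..<d}"
  have cA: "card ?A = d" using card_image[OF inj] by simp
  have lc: "lead_coeff (map_poly \<phi> P) = 1" using assms(2) hphi by (simp add: lead_coeff_map_poly_hom)
  have dP: "degree (map_poly \<phi> P) = d" using degree_map_poly_hom[OF hphi] d_def by simp
  show eq: "map_poly \<phi> P = (\<Prod>i<degree P. [:- (\<theta> ^ (CARD('k) ^ i)), 1:])"
    unfolding d_def[symmetric]
  proof (rule poly_eqI_degree_lead_coeff[of _ d _ ?A])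
    show "coeff (map_poly \<phi> P) d = coeff (\<Prod>i<d. [:- (\<theta> ^ CARD('k) ^ i), 1:]) d"
      using lc dP monic_prod_linear[of "\<lambda>i. \<theta> ^ (CARD('k) ^ i)" "{..<d}"] degree_cyc[where m=d and \<beta>=\<theta>]
      by simp
    show "degree (\<Prod>i<d. [:- (\<theta> ^ CARD('k) ^ i), 1:]) \<le> d" by (simp add: degree_cyc)
    fix z assume "z \<in> ?A"
    then show "poly (map_poly \<phi> P) z = poly (\<Prod>i<d. [:- (\<theta> ^ CARD('k) ^ i), 1:]) z"
      using conj_root[OF assms(3)] by (auto simp: poly_prod)
  qed (use cA dP in auto)
  have "poly (map_poly \<phi> P) (\<theta> ^ (CARD('k) ^ d)) = 0" by (rule conj_root[OF assms(3)])
  then obtain i where i: "i < d" "\<theta> ^ (CARD('k) ^ d) = \<theta> ^ (CARD('k) ^ i)"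
    unfolding eq d_def[symmetric] poly_prod by (auto simp: prod_zero_iff)
  show "\<theta> ^ (CARD('k) ^ degree P) = \<theta>"
  proof (cases "i = 0")
    case True then show ?thesis using i d_def by simp
  next
    case False
    have "\<theta> ^ (CARD('k) ^ d) = (\<theta> ^ (CARD('k) ^ (d - i))) ^ (CARD('k) ^ i)"
      using i by (simp add: pow_pow)
    then have "\<theta> ^ (CARD('k) ^ (d - i)) = \<theta>" using i by (simp add: frob_inj_eq)
    moreover have "\<theta> ^ (CARD('k) ^ (d - i)) \<noteq> \<theta>"
      using distinct_conj[OF assms(1,3), of "d - i"] False i d_def by simp
    ultimately show ?thesis by simp
  qed
qed

lemma degree_from_conj:
  assumes "irreducible P" "poly (map_poly \<phi> P) \<theta> = 0" "\<theta> ^ (CARD('k) ^ m) = \<theta>"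
    and "\<And>j. 0 < j \<Longrightarrow> j < m \<Longrightarrow> \<theta> ^ (CARD('k) ^ j) \<noteq> \<theta>" and "m > 0"
  shows "degree P = m"
proof (rule antisym)
  obtain g where g: "map_poly \<phi> g = (\<Prod>i<m. [:- (\<theta> ^ (CARD('k) ^ i)), 1:])"
    using cyc_poly[OF assms(3)] by blast
  have "m > 0" by fact
  then have "poly (map_poly \<phi> g) \<theta> = 0" unfolding g poly_prod
    by (intro prod_zero) (auto intro!: bexI[of _ 0])
  then have "P dvd g" using minpoly_dvd[OF assms(1,2)] by blast
  moreover have "degree g = m" using g degree_cyc degree_map_poly_hom[OF hphi] by (simp add: degree_map_poly_hom[OF hphi, symmetric])
  moreover have "g \<noteq> 0" using g map_poly_eq0_hom[OF hphi]
    by (metis monic_prod_linear leading_coeff_0_iff zero_neq_one)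
  ultimately show "degree P \<le> m" by (metis dvd_imp_degree_le)
  have "P \<noteq> 0" using assms(1) by auto
  then have nz: "map_poly \<phi> P \<noteq> 0" using map_poly_eq0_hom[OF hphi] by simp
  have inj: "inj_on (\<lambda>i. \<theta> ^ (CARD('k) ^ i)) {..<m}" using assms(4) by (intro conj_inj) auto
  have "m = card ((\<lambda>i. \<theta> ^ (CARD('k) ^ i)) ` {..<m})" using card_image[OF inj] by simp
  also have "\<dots> \<le> card {x. poly (map_poly \<phi> P) x = 0}"
    by (intro card_mono poly_roots_finite nz) (use conj_root[OF assms(2)] in auto)
  also have "\<dots> \<le> degree (map_poly \<phi> P)" by (rule card_poly_roots_bound[OF nz])
  finally show "m \<le> degree P" using degree_map_poly_hom[OF hphi] by simp
qed

end


lemma prime_not_dvd_prod: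
  fixes p :: "'a::comm_semiring_1"
  assumes "prime_elem p" "finite A" "\<And>x. x \<in> A \<Longrightarrow> \<not> p dvd f x"
  shows "\<not> p dvd prod f A"
  using assms(2,3)
proof (induction A rule: finite_induct)
  case empty then show ?case using assms(1) by (simp add: prime_elem_def)
next
  case (insert x A)
  then show ?case using assms(1) by (simp add: prime_elem_dvd_mult_iff)
qed

lemma card_deg_less:
  assumes "n > 0"
  shows "card {g :: 'a::{finite,field} poly. degree g < n} = CARD('a) ^ n"
proof -
  let ?R = "{g :: 'a poly. degree g < n}"
  let ?F = "PiE {..<n} (\<lambda>_. UNIV :: 'a set)"
  have "bij_betw (\<lambda>g. restrict (coeff g) {..<n}) ?R ?F"
  proof (rule bij_betwI')
    fix g h assume "g \<in> ?R" "h \<in> ?R"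
    then have dg: "degree g < n" "degree h < n" by auto
    show "(restrict (coeff g) {..<n} = restrict (coeff h) {..<n}) = (g = h)"
    proof
      assume e: "restrict (coeff g) {..<n} = restrict (coeff h) {..<n}"
      show "g = h"
      proof (rule poly_eqI)
        fix i show "coeff g i = coeff h i"
        proof (cases "i < n")
          case True then show ?thesis using fun_cong[OF e, of i] by simp
        next
          case False then show ?thesis using dg by (simp add: coeff_eq_0)
        qed
      qed
    qed simp
  next
    fix g show "restrict (coeff g) {..<n} \<in> ?F" by (simp add: restrict_PiE_iff)
  next
    fix f assume f: "f \<in> ?F"
    define g where "g = (\<Sum>i<n. monom (f i) i)"
    have cg: "coeff g j = (if j < n then f j else 0)" for j
      unfolding g_def by (simp add: coeff_sum coeff_monom)
    have "degree g < n" using assms by (intro degree_lessI) (auto simp: cg)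
    moreover have "f = restrict (coeff g) {..<n}"
    proof
      fix x show "f x = restrict (coeff g) {..<n} x"
      proof (cases "x < n")
        case True then show ?thesis by (simp add: cg)
      next
        case False then show ?thesis using PiE_arb[OF f, of x] by simp
      qed
    qed
    ultimately show "\<exists>g\<in>?R. f = restrict (coeff g) {..<n}" by blast
  qed
  then have "card ?R = card ?F" by (rule bij_betw_same_card)
  also have "\<dots> = CARD('a) ^ n" by (simp add: card_PiE)
  finally show ?thesis .
qed

lemma irred_dvd_frob:
  fixes P :: "'a::{finite,field} poly"
  assumes irr: "irreducible P" and n: "degree P = n"
  shows "P dvd (monom 1 (CARD('a) ^ n) - monom 1 1)"
proof -
  have pr: "prime_elem P" using irr by (rule field_poly_irreducible_imp_prime)
  have "P \<noteq> 0" using irr by auto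
  have n0: "n > 0" using irr n by (metis irreducible_def is_unit_iff_degree neq0_conv)
  let ?R = "{g :: 'a poly. degree g < n}"
  let ?R' = "?R - {0}"
  have fin: "finite ?R"
  proof (rule card_ge_0_finite)
    show "card ?R > 0" using card_deg_less[OF n0, where 'a='a] by simp
  qed
  have cR': "card ?R' = CARD('a) ^ n - 1"
    using card_deg_less[OF n0, where 'a='a] fin n0 by (simp add: card_Diff_singleton)
  have small: "w = 0" if "P dvd w" "degree w < n" for w
    using that n \<open>P \<noteq> 0\<close> by (metis dvd_imp_degree_le not_le)
  have ndR: "\<not> P dvd u" if "u \<in> ?R'" for u using that small by auto
  have key: "P dvd r ^ (CARD('a) ^ n) - r" if r: "r \<in> ?R" for r
  proof (cases "r = 0")
    case True
    have "CARD('a) ^ n > 0" by simp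
    then show ?thesis using True by (simp add: power_0_left)
  next
    case False
    then have rR: "r \<in> ?R'" using r by auto
    define f where "f u = (r * u) mod P" for u
    have fR: "f u \<in> ?R'" if "u \<in> ?R'" for u
    proof -
      have "\<not> P dvd r * u" using ndR[OF rR] ndR[OF that] pr by (simp add: prime_elem_dvd_mult_iff)
      then have "f u \<noteq> 0" by (simp add: f_def mod_eq_0_iff_dvd)
      then show ?thesis using degree_mod_less'[OF \<open>P \<noteq> 0\<close>, of "r * u"] n by (simp add: f_def)
    qed
    have inj: "inj_on f ?R'"
    proof (rule inj_onI)
      fix u v assume u: "u \<in> ?R'" and v: "v \<in> ?R'" and e: "f u = f v"
      then have "P dvd r * u - r * v" by (simp add: f_def mod_eq_dvd_iff)
      then have "P dvd r * (u - v)" by (simp add: algebra_simps)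
      then have "P dvd u - v" using ndR[OF rR] pr by (simp add: prime_elem_dvd_mult_iff)
      moreover have "degree (u - v) < n" using u v by (auto intro: degree_diff_less)
      ultimately have "u - v = 0" using small by blast
      then show "u = v" by simp
    qed
    have img: "f ` ?R' = ?R'" using fR by (intro endo_inj_surj inj) (auto intro: finite_subset[OF _ fin])
    have "prod id ?R' = prod id (f ` ?R')" using img by simp
    also have "\<dots> = prod f ?R'" using prod.reindex[OF inj, of id] by simp
    finally have e1: "prod id ?R' = prod f ?R'" .
    have "prod f ?R' mod P = (\<Prod>u\<in>?R'. r * u) mod P"
      unfolding f_def by (rule mod_prod_eq)
    also have "(\<Prod>u\<in>?R'. r * u) = r ^ card ?R' * prod id ?R'"
      by (simp add: prod.distrib)
    finally have "prod id ?R' mod P = (r ^ card ?R' * prod id ?R') mod P" using e1 by simp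
    then have "P dvd prod id ?R' - r ^ card ?R' * prod id ?R'" by (simp add: mod_eq_dvd_iff)
    then have "P dvd (1 - r ^ card ?R') * prod id ?R'" by (simp add: algebra_simps)
    moreover have "\<not> P dvd prod id ?R'"
      by (rule prime_not_dvd_prod[OF pr]) (use ndR fin in auto)
    ultimately have "P dvd 1 - r ^ card ?R'" using pr by (simp add: prime_elem_dvd_mult_iff)
    then have "P dvd r * (1 - r ^ card ?R')" by simp
    moreover have "Suc (card ?R') = CARD('a) ^ n" using cR' by simp
    then have "r ^ (CARD('a) ^ n) = r * r ^ card ?R'" by (metis power_Suc)
    then have "r ^ (CARD('a) ^ n) - r = - (r * (1 - r ^ card ?R'))" by (simp add: algebra_simps)
    ultimately show ?thesis by (simp only: dvd_minus_iff)
  qed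
  define r where "r = monom 1 1 mod P"
  have rR: "r \<in> ?R"
    using degree_mod_less[OF \<open>P \<noteq> 0\<close>, of "monom 1 1"] n n0 by (auto simp: r_def)
  have "(monom 1 1) ^ (CARD('a) ^ n) mod P = r ^ (CARD('a) ^ n) mod P"
    unfolding r_def by (simp add: power_mod)
  also have "\<dots> = r mod P" using key[OF rR] by (simp add: mod_eq_dvd_iff)
  also have "\<dots> = monom 1 1 mod P" by (simp add: r_def)
  finally have "P dvd (monom 1 1) ^ (CARD('a) ^ n) - monom 1 1" by (simp add: mod_eq_dvd_iff)
  then show ?thesis by (simp add: monom_power)
qed

context ctx begin

lemma frob_poly_split:
  "map_poly \<phi> (monom 1 (CARD('k) ^ s) - monom 1 1) = (\<Prod>x\<in>(UNIV::'L set). [:- x, 1:])"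
proof (rule poly_eqI_degree_lead_coeff[of _ "CARD('k) ^ s" _ UNIV])
  have qs: "CARD('k) ^ s > 1" using q2 s1 by (intro one_less_power) auto
  have d: "degree (monom (1::'L) (CARD('k) ^ s) - monom 1 1) = CARD('k) ^ s"
    using degree_add_eq_left[of "- monom (1::'L) 1" "monom 1 (CARD('k) ^ s)"] qs
    by (simp add: degree_monom_eq)
  show "coeff (map_poly \<phi> (monom 1 (CARD('k) ^ s) - monom 1 1)) (CARD('k) ^ s) =
        coeff (\<Prod>x\<in>UNIV. [:- x, 1:]) (CARD('k) ^ s)"
    using qs hphi monic_prod_linear[of "\<lambda>x::'L. x" UNIV] degree_prod_linear[of UNIV "\<lambda>x::'L. x"] cardL
    by (simp add: coeff_map_poly coeff_monom)
  show "degree (map_poly \<phi> (monom 1 (CARD('k) ^ s) - monom 1 1)) \<le> CARD('k) ^ s"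
    using hphi qs by (simp, intro degree_diff_le) (auto intro: order.trans[OF degree_monom_le])
  show "degree (\<Prod>x\<in>(UNIV::'L set). [:- x, 1:]) \<le> CARD('k) ^ s"
    using degree_prod_linear[of UNIV "\<lambda>x::'L. x"] cardL by simp
  show "CARD('k) ^ s \<le> card (UNIV :: 'L set)" using cardL by simp
  fix z :: 'L
  show "poly (map_poly \<phi> (monom 1 (CARD('k) ^ s) - monom 1 1)) z = poly (\<Prod>x\<in>UNIV. [:- x, 1:]) z"
    using hphi powL[of z] by (simp add: poly_monom poly_prod)
qed

lemma root_exists:
  assumes "irreducible P" "degree P = s"
  shows "\<exists>\<theta>. poly (map_poly \<phi> P) \<theta> = 0"
proof -
  have "map_poly \<phi> P dvd (\<Prod>x\<in>(UNIV::'L set). [:- x, 1:])"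
    unfolding frob_poly_split[symmetric] map_poly_dvd_iff[OF hphi]
    using irred_dvd_frob[OF assms] .
  moreover have "degree (map_poly \<phi> P) > 0" using s1 assms(2) by (simp add: degree_map_poly_hom[OF hphi])
  ultimately show ?thesis using root_of_dvd_prod[of "UNIV::'L set" "map_poly \<phi> P" "\<lambda>x. x"] by auto
qed

end


context ctx begin

lemma fiber_psi:
  "{x::'L. x ^ CARD('k) - x = x0 ^ CARD('k) - x0} = (\<lambda>a. x0 + \<phi> a) ` UNIV"
proof -
  have "x ^ CARD('k) - x = x0 ^ CARD('k) - x0 \<longleftrightarrow> (x - x0) ^ CARD('k) = x - x0" for x :: 'L
  proof -
    have e: "(x - x0) ^ CARD('k) = x ^ CARD('k) - x0 ^ CARD('k)" using frob_diff_n[of x x0 1] by simp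
    show ?thesis unfolding e by (auto simp: algebra_simps)
  qed
  then have "x ^ CARD('k) - x = x0 ^ CARD('k) - x0 \<longleftrightarrow> x - x0 \<in> range \<phi>" for x :: 'L
    by (simp add: range_phi)
  then show ?thesis by (auto simp: image_iff algebra_simps)
qed

lemma card_fiber: "card ((\<lambda>a. x0 + \<phi> a) ` (UNIV::'k set)) = CARD('k)"
proof -
  have "inj (\<lambda>a. x0 + \<phi> a)" using phi_inj by (auto simp: inj_def)
  then show ?thesis by (simp add: card_image)
qed

lemma hilbert90:
  assumes tr: "(\<Sum>i<s. \<beta> ^ (CARD('k) ^ i)) = (0::'L)"
  shows "\<exists>\<theta>. \<theta> ^ CARD('k) - \<theta> = \<beta>"
proof -
  define \<psi> where "\<psi> x = x ^ CARD('k) - x" for x :: 'L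
  define I where "I = range \<psi>"
  have fibc: "card (\<psi> -` {y}) = CARD('k)" if yI: "y \<in> I" for y
  proof -
    obtain x0 where "y = \<psi> x0" using yI unfolding I_def by blast
    then have "\<psi> -` {y} = (\<lambda>a. x0 + \<phi> a) ` UNIV" using fiber_psi[of x0] by (auto simp: \<psi>_def vimage_def)
    then show ?thesis by (simp add: card_fiber)
  qed
  have U: "(UNIV :: 'L set) = (\<Union>y\<in>I. \<psi> -` {y})" by (auto simp: I_def)
  have "card (UNIV :: 'L set) = (\<Sum>y\<in>I. card (\<psi> -` {y}))"
    by (subst U, rule card_UN_disjoint) auto
  also have "\<dots> = card I * CARD('k)" using fibc by simp
  finally have cI: "CARD('k) ^ s = card I * CARD('k)" using cardL by simp
  have cI2: "card I = CARD('k) ^ (s - 1)"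
  proof -
    have "CARD('k) ^ s = CARD('k) ^ (s - 1) * CARD('k)" using s1
      by (metis Suc_diff_1 less_le_trans power_Suc2 zero_less_one)
    then show ?thesis using cI q2 by simp
  qed
  define T :: "'L poly" where "T = (\<Sum>i<s. monom 1 (CARD('k) ^ i))"
  have cT: "coeff T j = (\<Sum>i<s. if CARD('k) ^ i = j then 1 else 0)" for j
    unfolding T_def by (simp add: coeff_sum coeff_monom)
  have pinj: "CARD('k) ^ i = CARD('k) ^ j \<longleftrightarrow> i = j" for i j
    using q2 by (simp add: power_inject_exp)
  have "coeff T (CARD('k) ^ (s - 1)) = (\<Sum>i<s. if i = s - 1 then 1 else 0)"
    unfolding cT by (intro sum.cong) (auto simp: pinj)
  also have "\<dots> = 1" using s1 by simp
  finally have "T \<noteq> 0" by auto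
  have dT: "degree T \<le> CARD('k) ^ (s - 1)"
  proof (rule degree_le, intro allI impI)
    fix j assume j: "CARD('k) ^ (s - 1) < j"
    have "CARD('k) ^ i \<noteq> j" if "i < s" for i
    proof -
      have "CARD('k) ^ i \<le> CARD('k) ^ (s - 1)" using that q2 by (intro power_increasing) auto
      then show ?thesis using j by simp
    qed
    then show "coeff T j = 0" unfolding cT by (intro sum.neutral) auto
  qed
  let ?TK = "{x. poly T x = 0}"
  have sub: "I \<subseteq> ?TK"
  proof
    fix y assume "y \<in> I"
    then obtain x where y: "y = \<psi> x" by (auto simp: I_def)
    have "poly T y = (\<Sum>i<s. (x ^ CARD('k) - x) ^ (CARD('k) ^ i))"
      unfolding T_def y \<psi>_def by (simp add: poly_sum poly_monom)
    also have "\<dots> = (\<Sum>i<s. x ^ (CARD('k) ^ Suc i) - x ^ (CARD('k) ^ i))"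
      by (intro sum.cong refl) (simp add: frob_diff_n pow_pow[of _ 1, simplified])
    also have "\<dots> = x ^ (CARD('k) ^ s) - x" by (subst sum_lessThan_telescope) simp
    also have "\<dots> = 0" by (simp add: powL)
    finally show "y \<in> ?TK" by simp
  qed
  have "card ?TK \<le> degree T" by (rule card_poly_roots_bound[OF \<open>T \<noteq> 0\<close>])
  then have "card ?TK \<le> card I" using dT cI2 by simp
  then have "I = ?TK" using sub poly_roots_finite[OF \<open>T \<noteq> 0\<close>]
    by (metis card_mono card_subset_eq le_antisym)
  moreover have "\<beta> \<in> ?TK" using tr unfolding T_def by (simp add: poly_sum poly_monom)
  ultimately have "\<beta> \<in> range \<psi>" by (simp add: I_def)
  then show ?thesis by (auto simp: \<psi>_def)
qed

end


definition d0 :: "nat \<Rightarrow> 'L::comm_ring_1" where "d0 k = (if k = 0 then 1 else 0)"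
definition Rop :: "nat \<Rightarrow> 'L::comm_ring_1 \<Rightarrow> (nat \<Rightarrow> 'L) \<Rightarrow> nat \<Rightarrow> 'L" where
  "Rop q t u k = (if k = 0 then 0 else u (k - 1)) + u k * t ^ (q ^ k)"
definition Lop :: "nat \<Rightarrow> 'L::comm_ring_1 \<Rightarrow> (nat \<Rightarrow> 'L) \<Rightarrow> nat \<Rightarrow> 'L" where
  "Lop q t u k = (if k = 0 then 0 else u (k - 1) ^ q) + t * u k"
definition Rpow :: "nat \<Rightarrow> 'L::comm_ring_1 \<Rightarrow> nat \<Rightarrow> nat \<Rightarrow> 'L" where
  "Rpow q t i = (Rop q t ^^ i) d0"
definition Aseq :: "nat \<Rightarrow> 'L::comm_ring_1 \<Rightarrow> nat \<Rightarrow> 'L" where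
  "Aseq q t i = (\<Sum>k\<le>i. Rpow q t i k)"
definition lin :: "(nat \<Rightarrow> 'L::comm_ring_1) \<Rightarrow> 'L poly \<Rightarrow> 'L" where
  "lin A g = (\<Sum>i\<le>degree g. coeff g i * A i)"
definition Uf :: "nat \<Rightarrow> 'L::comm_ring_1 \<Rightarrow> 'L poly \<Rightarrow> nat \<Rightarrow> 'L" where
  "Uf q t g k = lin (\<lambda>i. Rpow q t i k) g"

lemma Rpow_Suc: "Rpow q t (Suc i) = Rop q t (Rpow q t i)"
  by (simp add: Rpow_def)

lemma Rpow_0: "Rpow q t i 0 = t ^ i"
  by (induction i) (simp_all add: Rpow_Suc Rop_def, simp add: Rpow_def d0_def)

lemma Rpow_gt: "i < k \<Longrightarrow> Rpow q t i k = 0"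
proof (induction i arbitrary: k)
  case 0 then show ?case by (simp add: Rpow_def d0_def)
next
  case (Suc i)
  then show ?case by (simp add: Rpow_Suc Rop_def)
qed

lemma Rpow_diag: "Rpow q t i i = 1"
proof (induction i)
  case 0 then show ?case by (simp add: Rpow_def d0_def)
next
  case (Suc i)
  then show ?case by (simp add: Rpow_Suc Rop_def Rpow_gt)
qed

lemma lin_bound:
  assumes "degree g \<le> n"
  shows "lin A g = (\<Sum>i\<le>n. coeff g i * A i)"
  unfolding lin_def using assms
  by (intro sum.mono_neutral_left) (auto simp: coeff_eq_0)

lemma lin_add: "lin A (g + h) = lin A g + lin A h"
proof -
  define n where "n = max (degree g) (degree h)"
  have "degree (g + h) \<le> n" unfolding n_def by (rule degree_add_le_max)
  then show ?thesis
    using lin_bound[of g n A] lin_bound[of h n A] lin_bound[of "g + h" n A]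
    by (simp add: n_def sum.distrib algebra_simps)
qed

lemma lin_smult: "lin A (smult c g) = c * lin A g"
proof -
  have "lin A (smult c g) = (\<Sum>i\<le>degree g. coeff (smult c g) i * A i)"
    by (rule lin_bound) (simp add: degree_smult_le)
  then show ?thesis by (simp add: lin_def sum_distrib_left mult.assoc)
qed

lemma lin_uminus: "lin A (- g) = - lin A g"
  using lin_smult[of A "-1" g] by simp

lemma lin_diff: "lin A (g - h) = lin A g - lin A h"
  using lin_add[of A g "- h"] lin_uminus[of A h] by simp

lemma lin_const: "lin A [:c:] = c * A 0"
  by (simp add: lin_def)

lemma lin_1: "lin A 1 = A 0"
  using lin_const[of A 1] by (simp add: one_pCons)

lemma lin_pCons0: "lin A (pCons 0 g) = lin (\<lambda>i. A (Suc i)) g"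
proof -
  have "lin A (pCons 0 g) = (\<Sum>i\<le>Suc (degree g). coeff (pCons 0 g) i * A i)"
    by (rule lin_bound) (simp add: degree_pCons_le)
  also have "\<dots> = (\<Sum>i\<le>degree g. coeff g i * A (Suc i))"
    by (subst sum.atMost_Suc_shift) simp
  finally show ?thesis by (simp add: lin_def)
qed

lemma lin_fun_add: "lin (\<lambda>i. A i + B i) g = lin A g + lin B g"
  by (simp add: lin_def sum.distrib algebra_simps)

lemma lin_fun_multr: "lin (\<lambda>i. A i * c) g = lin A g * c"
  by (simp add: lin_def sum_distrib_right mult.assoc)

lemma lin_fun_multl: "lin (\<lambda>i. c * A i) g = c * lin A g"
  by (simp add: lin_def sum_distrib_left algebra_simps)

lemma lin_fun_0: "lin (\<lambda>i. 0) g = 0"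
  by (simp add: lin_def)

lemma Uf_pCons0:
  "Uf q t (pCons 0 g) k = (if k = 0 then 0 else Uf q t g (k - 1)) + Uf q t g k * t ^ (q ^ k)"
  by (cases k) (simp_all add: Uf_def lin_pCons0 Rpow_Suc Rop_def lin_fun_add lin_fun_multr lin_fun_0)

lemma Uf_gt: "degree g < k \<Longrightarrow> Uf q t g k = 0"
  by (simp add: Uf_def lin_def Rpow_gt)

lemma Uf_top: "Uf q t g (degree g) = lead_coeff g"
proof -
  have "Uf q t g (degree g) = (\<Sum>i\<le>degree g. if i = degree g then lead_coeff g else 0)"
    unfolding Uf_def lin_def
    by (intro sum.cong refl) (auto simp: Rpow_diag Rpow_gt)
  then show ?thesis by simp
qed

lemma Uf_0: "Uf q t g 0 = poly g t"
  by (simp add: Uf_def lin_def Rpow_0 poly_altdef)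

lemma lin_Aseq: "lin (Aseq q t) g = (\<Sum>k\<le>degree g. Uf q t g k)"
proof -
  have "lin (Aseq q t) g = (\<Sum>i\<le>degree g. coeff g i * (\<Sum>k\<le>degree g. Rpow q t i k))"
    unfolding lin_def Aseq_def
  proof (intro sum.cong refl)
    fix i assume i: "i \<in> {..degree g}"
    have "(\<Sum>k\<le>i. Rpow q t i k) = (\<Sum>k\<le>degree g. Rpow q t i k)"
      using i by (intro sum.mono_neutral_left) (auto simp: Rpow_gt)
    then show "coeff g i * (\<Sum>k\<le>i. Rpow q t i k) = coeff g i * (\<Sum>k\<le>degree g. Rpow q t i k)" by simp
  qed
  also have "\<dots> = (\<Sum>i\<le>degree g. \<Sum>k\<le>degree g. coeff g i * Rpow q t i k)"
    by (simp add: sum_distrib_left)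
  also have "\<dots> = (\<Sum>k\<le>degree g. \<Sum>i\<le>degree g. coeff g i * Rpow q t i k)"
    by (rule sum.swap)
  finally show ?thesis by (simp add: Uf_def lin_def)
qed

context ctx begin

lemma Lop_Rop_comm:
  fixes t :: 'L and u :: "nat \<Rightarrow> 'L"
  shows "Lop CARD('k) t (Rop CARD('k) t u) = Rop CARD('k) t (Lop CARD('k) t u)"
proof
  fix k
  show "Lop CARD('k) t (Rop CARD('k) t u) k = Rop CARD('k) t (Lop CARD('k) t u) k"
  proof (cases k)
    case 0 then show ?thesis by (simp add: Lop_def Rop_def)
  next
    case (Suc j)
    have fr: "(a + b * c) ^ CARD('k) = a ^ CARD('k) + b ^ CARD('k) * c ^ CARD('k)" for a b c :: 'L
      using frobL_add by (simp add: power_mult_distrib)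
    have tq: "(t ^ (CARD('k) ^ j)) ^ CARD('k) = t ^ (CARD('k) * CARD('k) ^ j)"
      by (simp add: power_mult[symmetric] mult.commute)
    have z: "(if j = 0 then 0 else u (j - 1)) ^ CARD('k) = (if j = 0 then 0 else u (j - 1) ^ CARD('k))"
      using q2 by (simp add: power_0_left)
    show ?thesis using Suc
      by (simp add: Lop_def Rop_def frobL_add power_mult_distrib tq z algebra_simps)
  qed
qed

lemma Rop_d0:
  fixes t :: 'L
  shows "Rop CARD('k) t d0 = Lop CARD('k) t d0"
proof
  fix k show "Rop CARD('k) t d0 k = Lop CARD('k) t d0 k"
    using q2 by (cases k) (auto simp: Rop_def Lop_def d0_def power_0_left)
qed

lemma Rpow_Suc_L:
  fixes t :: 'L
  shows "Rpow CARD('k) t (Suc i) = Lop CARD('k) t (Rpow CARD('k) t i)"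
proof -
  have *: "(Rop CARD('k) t ^^ i) (Lop CARD('k) t u) = Lop CARD('k) t ((Rop CARD('k) t ^^ i) u)" for u
    by (induction i) (simp_all add: Lop_Rop_comm)
  have "Rpow CARD('k) t (Suc i) = (Rop CARD('k) t ^^ i) (Rop CARD('k) t d0)"
    by (simp add: Rpow_def funpow_Suc_right del: funpow.simps)
  also have "\<dots> = Lop CARD('k) t (Rpow CARD('k) t i)"
    by (simp add: Rop_d0 * Rpow_def)
  finally show ?thesis .
qed

lemma Aseq_0:
  fixes t :: 'L
  shows "Aseq CARD('k) t 0 = 1"
  by (simp add: Aseq_def Rpow_def d0_def)

lemma Aseq_Suc:
  fixes t :: 'L
  shows "Aseq CARD('k) t (Suc i) = Aseq CARD('k) t i ^ CARD('k) + t * Aseq CARD('k) t i"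
proof -
  have "Aseq CARD('k) t (Suc i) = (\<Sum>k\<le>Suc i. Lop CARD('k) t (Rpow CARD('k) t i) k)"
    by (simp add: Aseq_def Rpow_Suc_L)
  also have "\<dots> = (\<Sum>k\<le>Suc i. (if k = 0 then 0 else Rpow CARD('k) t i (k - 1) ^ CARD('k)))
                 + t * (\<Sum>k\<le>Suc i. Rpow CARD('k) t i k)"
    by (simp add: Lop_def sum.distrib sum_distrib_left distrib_left)
  also have "(\<Sum>k\<le>Suc i. (if k = 0 then 0 else Rpow CARD('k) t i (k - 1) ^ CARD('k)))
     = (\<Sum>k\<le>i. Rpow CARD('k) t i k ^ CARD('k))"
    by (subst sum.atMost_Suc_shift) simp
  also have "\<dots> = Aseq CARD('k) t i ^ CARD('k)"
    using frob_sum_n[of "\<lambda>k. Rpow CARD('k) t i k" "{..i}" 1] by (simp add: Aseq_def)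
  also have "(\<Sum>k\<le>Suc i. Rpow CARD('k) t i k) = Aseq CARD('k) t i"
    by (simp add: Aseq_def Rpow_gt)
  finally show ?thesis .
qed

lemma Uf_Lop:
  fixes g :: "'L poly" and t :: 'L
  assumes "\<And>i. coeff g i ^ CARD('k) = coeff g i"
  shows "Lop CARD('k) t (Uf CARD('k) t g) k = Uf CARD('k) t (pCons 0 g) k"
proof -
  have fr: "(lin (\<lambda>i. Rpow CARD('k) t i j) g) ^ CARD('k) = lin (\<lambda>i. Rpow CARD('k) t i j ^ CARD('k)) g" for j
    unfolding lin_def
    using frob_sum_n[of "\<lambda>i. coeff g i * Rpow CARD('k) t i j" "{..degree g}" 1]
    by (simp add: power_mult_distrib assms)
  have "Lop CARD('k) t (Uf CARD('k) t g) k = lin (\<lambda>i. Lop CARD('k) t (Rpow CARD('k) t i) k) g"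
    by (cases k) (simp_all add: Lop_def fr lin_fun_add lin_fun_multl lin_fun_0 Uf_def)
  also have "\<dots> = lin (\<lambda>i. Rpow CARD('k) t (Suc i) k) g" by (simp add: Rpow_Suc_L)
  also have "\<dots> = Uf CARD('k) t (pCons 0 g) k" by (simp add: Uf_def lin_pCons0)
  finally show ?thesis .
qed

end


fun Bseq :: "nat \<Rightarrow> 'L::comm_ring_1 \<Rightarrow> nat \<Rightarrow> 'L" where
  "Bseq q t 0 = 0"
| "Bseq q t (Suc i) = Aseq q t i + t * Bseq q t i"

lemma pderiv_sum: "pderiv (sum f A) = (\<Sum>x\<in>A. pderiv (f x))"
  by (induction A rule: infinite_finite_induct) (auto simp: pderiv_add)

lemma Uf_add: "Uf q t (a + b) k = Uf q t a k + Uf q t b k"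
  by (simp add: Uf_def lin_add)

lemma Uf_smult: "Uf q t (smult c a) k = c * Uf q t a k"
  by (simp add: Uf_def lin_smult)

lemma lin_Bseq_shift:
  "lin (Bseq q t) ([:- t, 1:] * h) = lin (Aseq q t) h"
proof -
  have e: "[:- t, 1:] * h = pCons 0 h + smult (- t) h" by simp
  have "lin (Bseq q t) ([:- t, 1:] * h) = lin (Bseq q t) (pCons 0 h) + lin (Bseq q t) (smult (- t) h)"
    by (simp only: e lin_add)
  then have "lin (Bseq q t) ([:- t, 1:] * h) = - t * lin (Bseq q t) h + lin (\<lambda>i. Bseq q t (Suc i)) h"
    by (simp add: lin_smult lin_pCons0 lin_uminus)
  also have "lin (\<lambda>i. Bseq q t (Suc i)) h = lin (Aseq q t) h + t * lin (Bseq q t) h"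
    by (simp add: lin_fun_add lin_fun_multl)
  finally show ?thesis by simp
qed

lemma sum_v:
  fixes v :: "nat \<Rightarrow> 'a::comm_ring_1"
  assumes "\<And>k. 1 \<le> k \<Longrightarrow> k \<le> m \<Longrightarrow> v (k - 1) = (t - t ^ (q ^ k)) * v k"
  shows "j \<le> m \<Longrightarrow> (\<Sum>k\<le>j. v k) = v j * ((-1) ^ j * poly (Fseq q j) t)"
proof (induction j)
  case 0 then show ?case by simp
next
  case (Suc j)
  have sq: "(-1::'a) ^ j * (-1) ^ j = 1" by (induction j) auto
  have IH: "(\<Sum>k\<le>j. v k) = v j * ((-1) ^ j * poly (Fseq q j) t)" using Suc by simp
  have vj: "v j = (t - t ^ (q ^ Suc j)) * v (Suc j)" using assms[of "Suc j"] Suc by simp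
  have "(\<Sum>k\<le>Suc j. v k) = v j * ((-1) ^ j * poly (Fseq q j) t) + v (Suc j)" using IH by simp
  also have "\<dots> = v (Suc j) * ((-1) ^ Suc j * poly (Fseq q (Suc j)) t)"
    unfolding vj by (simp add: poly_monom algebra_simps sq)
  finally show ?case .
qed

context ctx begin

lemma Uf_monic_fixed:
  fixes g :: "'L poly" and t :: 'L
  assumes fx: "\<And>i. coeff g i ^ CARD('k) = coeff g i" and lc: "lead_coeff g = 1" and dg: "degree g = d"
    and rt: "poly g t = 0" and dist: "\<And>j. 0 < j \<Longrightarrow> j < d \<Longrightarrow> t ^ (CARD('k) ^ j) \<noteq> t"
  shows "Uf CARD('k) t g k = (if k = d then 1 else 0)"
proof -
  have step: "Uf CARD('k) t g k ^ CARD('k) + t * Uf CARD('k) t g (Suc k)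
      = Uf CARD('k) t g k + Uf CARD('k) t g (Suc k) * t ^ (CARD('k) ^ Suc k)" for k
    using Uf_Lop[OF fx, of t "Suc k"] Uf_pCons0[of "CARD('k)" t g "Suc k"] by (simp add: Lop_def)
  have low: "Uf CARD('k) t g k = 0" if "k < d" for k
    using that
  proof (induction k)
    case 0 then show ?case using rt by (simp add: Uf_0)
  next
    case (Suc k)
    then have z: "Uf CARD('k) t g k = 0" by simp
    have "t * Uf CARD('k) t g (Suc k) = Uf CARD('k) t g (Suc k) * t ^ (CARD('k) ^ Suc k)"
      using step[of k] z q2 by (simp add: power_0_left)
    then have "Uf CARD('k) t g (Suc k) * (t - t ^ (CARD('k) ^ Suc k)) = 0" by (simp add: algebra_simps)
    moreover have "t - t ^ (CARD('k) ^ Suc k) \<noteq> 0" using dist[of "Suc k"] Suc by simp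
    ultimately show ?case by simp
  qed
  show ?thesis
  proof (cases "k < d")
    case True then show ?thesis using low by simp
  next
    case False
    then show ?thesis using Uf_top[of "CARD('k)" t g] Uf_gt[of g k] lc dg by auto
  qed
qed

definition cseq :: "nat \<Rightarrow> 'k poly" where "cseq i = (carlitz_T CARD('k) ^^ i) 1"

lemma ev_cseq: "poly (map_poly \<phi> (cseq i)) t = Aseq CARD('k) t i"
proof (induction i)
  case 0 then show ?case using hphi by (simp add: cseq_def Aseq_0)
next
  case (Suc i)
  have "cseq (Suc i) = cseq i ^ CARD('k) + monom 1 1 * cseq i"
    by (simp add: cseq_def carlitz_T_def)
  then show ?case using Suc hphi by (simp add: Aseq_Suc poly_monom)
qed

lemma ev_dcseq: "poly (map_poly \<phi> (pderiv (cseq i))) t = Bseq CARD('k) t i"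
proof (induction i)
  case 0 then show ?case using hphi by (simp add: cseq_def)
next
  case (Suc i)
  have e: "cseq (Suc i) = cseq i ^ CARD('k) + monom 1 1 * cseq i"
    by (simp add: cseq_def carlitz_T_def)
  have "pderiv (cseq i ^ CARD('k)) = smult (of_nat CARD('k)) (cseq i ^ (CARD('k) - 1)) * pderiv (cseq i)"
    using pderiv_power_Suc[of "cseq i" "CARD('k) - 1"] q2 by simp
  then have z: "pderiv (cseq i ^ CARD('k)) = 0" using of_nat_q_k by simp
  have "pderiv (cseq (Suc i)) = monom 1 1 * pderiv (cseq i) + cseq i"
    unfolding e using z by (simp add: pderiv_add pderiv_mult pderiv_monom)
  then show ?case using Suc hphi by (simp add: poly_monom ev_cseq)
qed

lemma ev_carlitz: "poly (map_poly \<phi> (carlitz CARD('k) N 1)) t = lin (Aseq CARD('k) t) (map_poly \<phi> N)"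
  using hphi by (simp add: carlitz_def cseq_def[symmetric] poly_sum ev_cseq lin_def
      degree_map_poly_hom coeff_map_poly)

lemma ev_dcarlitz:
  "poly (map_poly \<phi> (pderiv (carlitz CARD('k) N 1))) t = lin (Bseq CARD('k) t) (map_poly \<phi> N)"
  using hphi by (simp add: carlitz_def cseq_def[symmetric] pderiv_sum pderiv_smult poly_sum
      ev_dcseq lin_def degree_map_poly_hom coeff_map_poly)

end


context ctx begin

lemma wieferich_iff:
  assumes irr: "irreducible P" and mon: "lead_coeff P = 1" and deg: "degree P = s"
    and root: "poly (map_poly \<phi> P) t = 0"
  shows "P ^ 2 dvd carlitz CARD('k) (P - 1) 1 \<longleftrightarrow> poly (Fseq CARD('k) (s - 1)) t = 0"
proof -
  have dist: "t ^ (CARD('k) ^ j) \<noteq> t" if "0 < j" "j < s" for j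
    using distinct_conj[OF irr root, of j] that deg by simp
  have fac: "map_poly \<phi> P = (\<Prod>i<s. [:- (t ^ (CARD('k) ^ i)), 1:])"
    using P_factor(1)[OF irr mon root] deg by simp
  define h where "h = (\<Prod>i\<in>{1..<s}. [:- (t ^ (CARD('k) ^ i)), 1:])"
  have "{..<s} = insert 0 {1..<s}" using s1 by auto
  then have fac2: "map_poly \<phi> P = [:- t, 1:] * h"
    unfolding fac h_def by (simp add: prod.insert)
  have dh: "degree h = s - 1" unfolding h_def by (simp add: degree_prod_linear)
  have lh: "lead_coeff h = 1" unfolding h_def by (rule monic_prod_linear)
  have ne: "t - t ^ (CARD('k) ^ i) \<noteq> 0" if "i \<in> {1..<s}" for i
    using dist[of i] that by auto
  have ph: "poly h t \<noteq> 0" unfolding h_def poly_prod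
    using ne by (simp add: prod_zero_iff)
  define G where "G = map_poly \<phi> P"
  have fx: "coeff G i ^ CARD('k) = coeff G i" for i
    unfolding G_def using hphi by (simp add: coeff_map_poly phi_frob[of _ 1, simplified])
  have dG: "degree G = s" unfolding G_def using deg by (simp add: degree_map_poly_hom[OF hphi])
  have lG: "lead_coeff G = 1" unfolding G_def using mon hphi by (simp add: lead_coeff_map_poly_hom)
  have UG: "Uf CARD('k) t G k = (if k = s then 1 else 0)" for k
    by (rule Uf_monic_fixed[OF fx lG dG]) (use root dist in \<open>auto simp: G_def\<close>)
  have E1: "lin (Aseq CARD('k) t) G = 1"
    unfolding lin_Aseq dG UG by simp
  define f where "f = carlitz CARD('k) (P - 1) 1"
  have evf: "poly (map_poly \<phi> f) t = 0"
    unfolding f_def ev_carlitz using hphi E1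
    by (simp add: G_def[symmetric] lin_diff lin_1 Aseq_0)
  then have "P dvd f" using minpoly_dvd[OF irr root] by blast
  then obtain g where g: "f = P * g" by (auto simp: dvd_def)
  define v where "v k = Uf CARD('k) t h k" for k
  have Grel: "Uf CARD('k) t G k = - t * v k + ((if k = 0 then 0 else v (k - 1)) + v k * t ^ (CARD('k) ^ k))" for k
  proof -
    have e: "G = smult (- t) h + pCons 0 h" unfolding G_def fac2 by simp
    show ?thesis unfolding v_def by (simp only: e Uf_add Uf_smult Uf_pCons0)
  qed
  have vrec: "v (k - 1) = (t - t ^ (CARD('k) ^ k)) * v k" if "1 \<le> k" "k \<le> s - 1" for k
  proof -
    have "Uf CARD('k) t G k = 0" using UG that by simp
    then show ?thesis using Grel[of k] that by (simp add: algebra_simps)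
  qed
  have vtop: "v (s - 1) = 1" unfolding v_def using Uf_top[of "CARD('k)" t h] dh lh by simp
  have linh: "lin (Aseq CARD('k) t) h = (-1) ^ (s - 1) * poly (Fseq CARD('k) (s - 1)) t"
  proof -
    have "lin (Aseq CARD('k) t) h = (\<Sum>k\<le>s - 1. v k)" unfolding lin_Aseq dh v_def ..
    also have "\<dots> = v (s - 1) * ((-1) ^ (s - 1) * poly (Fseq CARD('k) (s - 1)) t)"
      by (rule sum_v[OF vrec]) auto
    finally show ?thesis using vtop by simp
  qed
  have evdf: "poly (map_poly \<phi> (pderiv f)) t = (-1) ^ (s - 1) * poly (Fseq CARD('k) (s - 1)) t"
  proof -
    have "poly (map_poly \<phi> (pderiv f)) t = lin (Bseq CARD('k) t) (map_poly \<phi> (P - 1))"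
      unfolding f_def by (rule ev_dcarlitz)
    also have "\<dots> = lin (Bseq CARD('k) t) G"
      using hphi by (simp add: G_def lin_diff lin_1)
    also have "\<dots> = lin (Aseq CARD('k) t) h" unfolding G_def fac2 by (rule lin_Bseq_shift)
    finally show ?thesis using linh by simp
  qed
  have pr: "prime_elem P" using irr by (rule field_poly_irreducible_imp_prime)
  have "P \<noteq> 0" using irr by auto
  have ndP: "\<not> P dvd pderiv P"
  proof
    assume "P dvd pderiv P"
    then have "poly (map_poly \<phi> (pderiv P)) t = 0" using minpoly_dvd[OF irr root] by blast
    moreover have "poly (map_poly \<phi> (pderiv P)) t = poly h t"
      unfolding map_poly_pderiv[OF hphi] fac2 by (simp add: pderiv_mult pderiv_pCons pderiv_diff pderiv_smult)
    ultimately show False using ph by simp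
  qed
  have "P ^ 2 dvd f \<longleftrightarrow> P dvd g" using \<open>P \<noteq> 0\<close> by (simp add: g power2_eq_square)
  also have "\<dots> \<longleftrightarrow> P dvd g * pderiv P" using pr ndP by (simp add: prime_elem_dvd_mult_iff)
  also have "\<dots> \<longleftrightarrow> P dvd pderiv f"
    unfolding g pderiv_mult by (simp add: dvd_add_right_iff)
  also have "\<dots> \<longleftrightarrow> poly (map_poly \<phi> (pderiv f)) t = 0" by (rule minpoly_dvd[OF irr root])
  also have "\<dots> \<longleftrightarrow> poly (Fseq CARD('k) (s - 1)) t = 0" unfolding evdf by simp
  finally show ?thesis unfolding f_def .
qed

end


definition Gpoly :: "nat \<Rightarrow> 'L::comm_ring_1 \<Rightarrow> 'L poly" where
  "Gpoly q b = monom 1 q - monom 1 1 - [:b:]"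

lemma Fseq_hom: "hom h \<Longrightarrow> map_poly h (Fseq q n) = Fseq q n"
  by (induction n) auto

lemma Gpoly_hom: "hom h \<Longrightarrow> map_poly h (Gpoly q b) = Gpoly q (h b)"
  by (simp add: Gpoly_def)

lemma R_poly_Gpoly: "R_poly q s b = (\<Prod>i=1..s. Gpoly q (b ^ (q ^ i)))"
  by (simp add: R_poly_def Gpoly_def)

lemma trace_ext_sum: "trace_ext q s b = (\<Sum>i<s. b ^ (q ^ i))"
  by (simp add: trace_ext_def)

context ctx begin

lemma Gpoly_coeff: "coeff (Gpoly CARD('k) b) j = (if j = CARD('k) then 1 else 0) - (if j = 1 then 1 else 0) - (if j = 0 then b else 0)"
  by (simp add: Gpoly_def coeff_monom coeff_pCons split: nat.splits)

lemma Gpoly_degree: "degree (Gpoly CARD('k) (b::'L)) = CARD('k)"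
proof (rule antisym)
  show "degree (Gpoly CARD('k) b) \<le> CARD('k)"
    using q2 by (intro degree_le) (auto simp: Gpoly_coeff)
  show "CARD('k) \<le> degree (Gpoly CARD('k) b)"
    using q2 by (intro le_degree) (simp add: Gpoly_coeff)
qed

lemma Gpoly_lead: "lead_coeff (Gpoly CARD('k) (b::'L)) = 1"
  using q2 by (simp add: Gpoly_degree Gpoly_coeff)

lemma Gpoly_nz: "Gpoly CARD('k) (b::'L) \<noteq> 0"
  using Gpoly_lead[of b] by auto

lemma poly_Gpoly: "poly (Gpoly CARD('k) b) x = x ^ CARD('k) - x - (b::'L)"
  by (simp add: Gpoly_def poly_monom)

lemma Gsplit:
  assumes "\<theta> ^ CARD('k) - \<theta> = (b::'L)"
  shows "Gpoly CARD('k) b = (\<Prod>a\<in>(UNIV::'k set). [:- (\<theta> + \<phi> a), 1:])"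
proof -
  have inj: "inj (\<lambda>a. \<theta> + \<phi> a)" using phi_inj by (auto simp: inj_def)
  let ?A = "(\<lambda>a. \<theta> + \<phi> a) ` (UNIV::'k set)"
  have cA: "card ?A = CARD('k)" using card_image[OF inj] by simp
  show ?thesis
  proof (rule poly_eqI_degree_lead_coeff[of _ "CARD('k)" _ ?A])
    show "coeff (Gpoly CARD('k) b) CARD('k) = coeff (\<Prod>a\<in>UNIV. [:- (\<theta> + \<phi> a), 1:]) CARD('k)"
      using Gpoly_lead[of b] Gpoly_degree[of b] monic_prod_linear[of "\<lambda>a. \<theta> + \<phi> a" UNIV]
        degree_prod_linear[of "UNIV::'k set" "\<lambda>a. \<theta> + \<phi> a"] by simp
    show "degree (\<Prod>a\<in>(UNIV::'k set). [:- (\<theta> + \<phi> a), 1:]) \<le> CARD('k)"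
      using degree_prod_linear[of "UNIV::'k set" "\<lambda>a. \<theta> + \<phi> a"] by simp
    fix z assume "z \<in> ?A"
    then obtain a where z: "z = \<theta> + \<phi> a" by auto
    have "(\<theta> + \<phi> a) ^ CARD('k) = \<theta> ^ CARD('k) + \<phi> a" using frobL_add phi_frob[of a 1] by simp
    then show "poly (Gpoly CARD('k) b) z = poly (\<Prod>a\<in>UNIV. [:- (\<theta> + \<phi> a), 1:]) z"
      using assms z by (auto simp: poly_Gpoly poly_prod prod_zero_iff)
  qed (use cA Gpoly_degree in auto)
qed

lemma Gsplit_img:
  assumes "\<theta> ^ CARD('k) - \<theta> = (b::'L)"
  shows "Gpoly CARD('k) b = (\<Prod>x\<in>(\<lambda>a. \<theta> + \<phi> a) ` (UNIV::'k set). [:- x, 1:])"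
proof -
  have inj: "inj (\<lambda>a. \<theta> + \<phi> a)" using phi_inj by (auto simp: inj_def)
  show ?thesis unfolding Gsplit[OF assms] by (simp add: prod.reindex[OF inj])
qed

lemma fix_pow: "(c::'L) ^ CARD('k) = c \<Longrightarrow> c ^ (CARD('k) ^ n) = c"
proof -
  assume "c ^ CARD('k) = c"
  then have "c \<in> range \<phi>" using range_phi by simp
  then obtain a where "c = \<phi> a" by auto
  then show ?thesis by (simp add: phi_frob)
qed

lemma Fseq_shift:
  assumes "(c::'L) ^ CARD('k) = c"
  shows "poly (Fseq CARD('k) n) (x + c) = poly (Fseq CARD('k) n) x"
proof (induction n)
  case (Suc n)
  have c1: "c ^ (CARD('k) ^ Suc n) = c" by (rule fix_pow[OF assms])
  have "(x + c) ^ (CARD('k) ^ Suc n) = x ^ (CARD('k) ^ Suc n) + c"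
    using frob_add_n[of x c "Suc n"] unfolding c1 .
  moreover have "c ^ (CARD('k) * CARD('k) ^ n) = c" using fix_pow[OF assms, of "Suc n"] by simp
  ultimately show ?case using Suc by (simp add: poly_monom)
qed simp

lemma alpha_pow: "((\<theta>::'L) ^ CARD('k) - \<theta>) ^ (CARD('k) ^ n) = \<theta> ^ (CARD('k) ^ Suc n) - \<theta> ^ (CARD('k) ^ n)"
  using frob_diff_n[of "\<theta> ^ CARD('k)" \<theta> n] pow_pow[of \<theta> 1 n] by (simp add: add.commute)

lemma poly_pcompose_shift:
  "poly (map_poly \<phi> (pcompose P [:a, 1:])) x = poly (map_poly \<phi> P) (\<phi> a + x)"
  using hphi by (simp add: map_poly_pcompose poly_pcompose)

lemma cyc_root_poly:
  assumes "\<beta> ^ (CARD('k) ^ m) = (\<beta>::'L)" "m > 0"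
  shows "\<exists>p. p \<noteq> 0 \<and> degree p = m \<and> poly (map_poly \<phi> p) \<beta> = 0"
proof -
  obtain g where g: "map_poly \<phi> g = (\<Prod>i<m. [:- (\<beta> ^ (CARD('k) ^ i)), 1:])"
    using cyc_poly[OF assms(1)] by blast
  have "poly (map_poly \<phi> g) \<beta> = 0" unfolding g poly_prod
    using assms(2) by (intro prod_zero) (auto intro!: bexI[of _ 0])
  moreover have "degree g = m" using g degree_cyc by (simp add: degree_map_poly_hom[OF hphi, symmetric])
  moreover have "g \<noteq> 0" using g map_poly_eq0_hom[OF hphi]
    by (metis monic_prod_linear leading_coeff_0_iff zero_neq_one)
  ultimately show ?thesis by blast
qed

lemma roots_lower:
  assumes "\<And>j. 0 < j \<Longrightarrow> j < m \<Longrightarrow> (\<beta>::'L) ^ (CARD('k) ^ j) \<noteq> \<beta>"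
    and "p \<noteq> 0" "poly (map_poly \<phi> p) \<beta> = 0"
  shows "m \<le> degree p"
proof -
  have nz: "map_poly \<phi> p \<noteq> 0" using map_poly_eq0_hom[OF hphi] assms(2) by simp
  have inj: "inj_on (\<lambda>i. \<beta> ^ (CARD('k) ^ i)) {..<m}" using assms(1) by (intro conj_inj) auto
  have "m = card ((\<lambda>i. \<beta> ^ (CARD('k) ^ i)) ` {..<m})" using card_image[OF inj] by simp
  also have "\<dots> \<le> card {x. poly (map_poly \<phi> p) x = 0}"
    by (intro card_mono poly_roots_finite nz) (use conj_root[OF assms(3)] in auto)
  also have "\<dots> \<le> degree (map_poly \<phi> p)" by (rule card_poly_roots_bound[OF nz])
  finally show ?thesis using degree_map_poly_hom[OF hphi] by simp
qed

lemma alg_degree_eq: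
  assumes "\<beta> ^ (CARD('k) ^ m) = (\<beta>::'L)" "m > 0"
    and "\<And>j. 0 < j \<Longrightarrow> j < m \<Longrightarrow> \<beta> ^ (CARD('k) ^ j) \<noteq> \<beta>"
  shows "alg_degree \<phi> \<beta> = m"
  unfolding alg_degree_def
proof (rule Least_equality)
  show "\<exists>p. p \<noteq> 0 \<and> degree p = m \<and> poly (map_poly \<phi> p) \<beta> = 0" by (rule cyc_root_poly[OF assms(1,2)])
  fix y assume "\<exists>p. p \<noteq> 0 \<and> degree p = y \<and> poly (map_poly \<phi> p) \<beta> = 0"
  then show "m \<le> y" using roots_lower[OF assms(3)] by blast
qed

lemma alg_degree_le:
  assumes "\<beta> ^ (CARD('k) ^ m) = (\<beta>::'L)" "m > 0"
  shows "alg_degree \<phi> \<beta> \<le> m"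
  unfolding alg_degree_def by (rule Least_le) (rule cyc_root_poly[OF assms])

lemma R_exists:
  assumes "\<beta> ^ (CARD('k) ^ s) = (\<beta>::'L)"
  shows "\<exists>R. map_poly \<phi> R = R_poly CARD('k) s \<beta>"
proof -
  have "R_poly CARD('k) s \<beta> = (\<Prod>i<s. Gpoly CARD('k) (\<beta> ^ (CARD('k) ^ Suc i)))"
    by (simp only: R_poly_Gpoly prod_1_m_shift)
  also have "\<dots> = (\<Prod>i<s. Gpoly CARD('k) (\<beta> ^ (CARD('k) ^ i)))"
    by (rule cyc_shift[where f = "\<lambda>i. Gpoly CARD('k) (\<beta> ^ (CARD('k) ^ i))"]) (use assms Gpoly_nz in auto)
  finally have e: "R_poly CARD('k) s \<beta> = (\<Prod>i<s. Gpoly CARD('k) (\<beta> ^ (CARD('k) ^ i)))" .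
  show ?thesis unfolding e
    by (rule fixed_coeffs, rule cyc_fixed[OF _ _ assms]) (auto simp: Gpoly_hom[OF hom_frob1] Gpoly_nz)
qed

end


context ctx begin

lemma irr_deg_pos: "irreducible (P::'k poly) \<Longrightarrow> degree P > 0"
  by (metis irreducible_def is_unit_iff_degree neq0_conv)

lemma lhs_sub:
  assumes cw: "c_wieferich P" and nf: "non_fixed P" and deg: "degree P = s"
  shows "lead_coeff P = 1 \<and> irreducible P \<and>
            (\<exists>C \<in> B_set \<phi> s. \<exists>\<alpha> \<in> C. \<exists>R :: 'k poly.
               map_poly \<phi> R = R_poly CARD('k) s \<alpha> \<and> P dvd R)"
proof -
  have mon: "lead_coeff P = 1" and irr: "irreducible P"
    and W: "P ^ 2 dvd carlitz CARD('k) (P - 1) 1" using cw by (auto simp: c_wieferich_def)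
  obtain \<theta> where root: "poly (map_poly \<phi> P) \<theta> = 0" using root_exists[OF irr deg] by blast
  have FF: "poly (Fseq CARD('k) (s - 1)) \<theta> = 0" using wieferich_iff[OF irr mon deg root] W by simp
  define \<alpha> where "\<alpha> = \<theta> ^ CARD('k) - \<theta>"
  have dist: "\<theta> ^ (CARD('k) ^ j) \<noteq> \<theta>" if "0 < j" "j < s" for j
    using distinct_conj[OF irr root, of j] that deg by simp
  have tr: "(\<Sum>i<s. \<alpha> ^ (CARD('k) ^ i)) = 0"
  proof -
    have "(\<Sum>i<s. \<alpha> ^ (CARD('k) ^ i)) = (\<Sum>i<s. \<theta> ^ (CARD('k) ^ Suc i) - \<theta> ^ (CARD('k) ^ i))"
      unfolding \<alpha>_def by (simp only: alpha_pow)
    also have "\<dots> = \<theta> ^ (CARD('k) ^ s) - \<theta>" by (subst sum_lessThan_telescope) simp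
    finally show ?thesis by (simp add: powL)
  qed
  have adist: "\<alpha> ^ (CARD('k) ^ j) \<noteq> \<alpha>" if j: "0 < j" "j < s" for j
  proof
    assume e: "\<alpha> ^ (CARD('k) ^ j) = \<alpha>"
    define c where "c = \<theta> ^ (CARD('k) ^ j) - \<theta>"
    have "c ^ CARD('k) = \<theta> ^ (CARD('k) ^ Suc j) - \<theta> ^ CARD('k)"
      unfolding c_def using frob_diff_n[of "\<theta> ^ (CARD('k) ^ j)" \<theta> 1] pow_pow[of \<theta> j 1] by simp
    also have "\<dots> = c" using e alpha_pow[of \<theta> j] unfolding c_def \<alpha>_def by (simp add: algebra_simps)
    finally have "c \<in> range \<phi>" using range_phi by simp
    then obtain a where a: "c = \<phi> a" by auto
    have "poly (map_poly \<phi> (pcompose P [:a, 1:])) \<theta> = 0"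
    proof -
      have "\<phi> a + \<theta> = \<theta> ^ (CARD('k) ^ j)" using a unfolding c_def by (simp add: algebra_simps)
      then show ?thesis unfolding poly_pcompose_shift using conj_root[OF root, of j] by simp
    qed
    then have "P dvd pcompose P [:a, 1:]" using minpoly_dvd[OF irr root] by blast
    moreover have "lead_coeff (pcompose P [:a, 1:]) = 1" using mon by (simp add: lead_coeff_comp)
    moreover have "degree (pcompose P [:a, 1:]) = degree P" by (simp add: degree_pcompose)
    ultimately have "P = pcompose P [:a, 1:]" using mon by (intro monic_dvd_eq) auto
    then have "a = 0" using nf by (simp add: non_fixed_def)
    then have "\<theta> ^ (CARD('k) ^ j) = \<theta>" using a hphi unfolding c_def by simp
    then show False using dist[OF j] by simp
  qed
  have adeg: "alg_degree \<phi> \<alpha> = s" using alg_degree_eq[OF powL _ adist] s1 by simp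
  have Gdvd: "Gpoly CARD('k) \<alpha> dvd Fseq CARD('k) (s - 1)"
  proof -
    have "Gpoly CARD('k) \<alpha> = (\<Prod>x\<in>(\<lambda>a. \<theta> + \<phi> a) ` (UNIV::'k set). [:- x, 1:])"
      by (rule Gsplit_img) (simp add: \<alpha>_def)
    also have "\<dots> dvd Fseq CARD('k) (s - 1)"
    proof (rule prod_dvd_of_roots)
      fix x assume "x \<in> (\<lambda>a. \<theta> + \<phi> a) ` (UNIV::'k set)"
      then obtain a where x: "x = \<theta> + \<phi> a" by auto
      have "(\<phi> a) ^ CARD('k) = \<phi> a" using phi_frob[of a 1] by simp
      then show "poly (Fseq CARD('k) (s - 1)) x = 0" unfolding x using Fseq_shift FF by metis
    qed simp
    finally show ?thesis .
  qed
  have CB: "frob_class CARD('k) \<alpha> \<in> B_set \<phi> s"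
    unfolding B_set_def using adeg tr Gdvd by (auto simp: trace_ext_sum Gpoly_def)
  have aC: "\<alpha> \<in> frob_class CARD('k) \<alpha>" unfolding frob_class_def by (auto intro: exI[of _ 0])
  obtain R where R: "map_poly \<phi> R = R_poly CARD('k) s \<alpha>" using R_exists[OF powL] by blast
  have "poly (map_poly \<phi> R) \<theta> = 0"
  proof -
    have "poly (map_poly \<phi> R) \<theta> = (\<Prod>i=1..s. poly (Gpoly CARD('k) (\<alpha> ^ (CARD('k) ^ i))) \<theta>)"
      unfolding R R_poly_Gpoly poly_prod ..
    also have "\<dots> = 0"
      using s1 by (intro prod_zero) (auto simp: poly_Gpoly powL \<alpha>_def intro!: bexI[of _ s])
    finally show ?thesis .
  qed
  then have "P dvd R" using minpoly_dvd[OF irr root] by blast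
  then show ?thesis using mon irr CB aC R by blast
qed

end


context ctx begin

lemma rhs_sub:
  assumes mon: "lead_coeff P = 1" and irr: "irreducible P" and CB: "C \<in> B_set \<phi> s"
    and a'C: "\<alpha>' \<in> C" and R: "map_poly \<phi> R = R_poly CARD('k) s \<alpha>'" and PR: "P dvd R"
  shows "c_wieferich P \<and> non_fixed P \<and> degree P = s"
proof -
  obtain \<alpha> where C: "C = frob_class CARD('k) \<alpha>" and adeg: "alg_degree \<phi> \<alpha> = s"
    and tr: "(\<Sum>i<s. \<alpha> ^ (CARD('k) ^ i)) = 0" and Gd: "Gpoly CARD('k) \<alpha> dvd Fseq CARD('k) (s - 1)"
    using CB unfolding B_set_def by (auto simp: trace_ext_sum Gpoly_def)
  obtain j where j: "\<alpha>' = \<alpha> ^ (CARD('k) ^ j)" using a'C C unfolding frob_class_def by auto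
  have adist: "\<alpha> ^ (CARD('k) ^ t) \<noteq> \<alpha>" if "0 < t" "t < s" for t
  proof
    assume "\<alpha> ^ (CARD('k) ^ t) = \<alpha>"
    then have "alg_degree \<phi> \<alpha> \<le> t" using alg_degree_le that by blast
    then show False using adeg that by simp
  qed
  have trm: "(\<Sum>i<s. (\<alpha> ^ (CARD('k) ^ m)) ^ (CARD('k) ^ i)) = 0" for m
  proof -
    have "(\<Sum>i<s. (\<alpha> ^ (CARD('k) ^ m)) ^ (CARD('k) ^ i)) = (\<Sum>i<s. (\<alpha> ^ (CARD('k) ^ i)) ^ (CARD('k) ^ m))"
      by (simp add: pow_pow add.commute)
    also have "\<dots> = (\<Sum>i<s. \<alpha> ^ (CARD('k) ^ i)) ^ (CARD('k) ^ m)" by (simp add: frob_sum_n)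
    finally show ?thesis using tr q2 by (simp add: power_0_left)
  qed
  have Gdm: "Gpoly CARD('k) (\<alpha> ^ (CARD('k) ^ m)) dvd Fseq CARD('k) (s - 1)" for m
  proof -
    have "map_poly (\<lambda>x. x ^ (CARD('k) ^ m)) (Gpoly CARD('k) \<alpha>) dvd map_poly (\<lambda>x. x ^ (CARD('k) ^ m)) (Fseq CARD('k) (s - 1))"
      by (rule map_poly_dvd[OF hom_frob Gd])
    then show ?thesis by (simp add: Gpoly_hom[OF hom_frob] Fseq_hom[OF hom_frob])
  qed
  have distm: "(\<alpha> ^ (CARD('k) ^ m)) ^ (CARD('k) ^ t) \<noteq> \<alpha> ^ (CARD('k) ^ m)" if "0 < t" "t < s" for m t
  proof
    assume "(\<alpha> ^ (CARD('k) ^ m)) ^ (CARD('k) ^ t) = \<alpha> ^ (CARD('k) ^ m)"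
    then have "(\<alpha> ^ (CARD('k) ^ t)) ^ (CARD('k) ^ m) = \<alpha> ^ (CARD('k) ^ m)" by (simp add: pow_pow add.commute)
    then have "\<alpha> ^ (CARD('k) ^ t) = \<alpha>" by (simp add: frob_inj_eq)
    then show False using adist that by blast
  qed
  define th where "th i = (SOME x. x ^ CARD('k) - x = \<alpha>' ^ (CARD('k) ^ i))" for i
  have th: "th i ^ CARD('k) - th i = \<alpha>' ^ (CARD('k) ^ i)" for i
  proof -
    have "\<exists>x. x ^ CARD('k) - x = \<alpha>' ^ (CARD('k) ^ i)"
      by (rule hilbert90) (use trm[of "j + i"] in \<open>simp add: j pow_pow\<close>)
    then show ?thesis unfolding th_def by (rule someI_ex)
  qed
  have "R_poly CARD('k) s \<alpha>' = (\<Prod>i\<in>{1..s}. \<Prod>a\<in>(UNIV::'k set). [:- (th i + \<phi> a), 1:])"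
    unfolding R_poly_Gpoly using Gsplit[OF th] by simp
  also have "\<dots> = (\<Prod>(i, a)\<in>{1..s} \<times> (UNIV::'k set). [:- (th i + \<phi> a), 1:])"
    by (rule prod.cartesian_product)
  finally have Rsplit: "R_poly CARD('k) s \<alpha>' = (\<Prod>x\<in>{1..s} \<times> (UNIV::'k set). [:- ((\<lambda>(i, a). th i + \<phi> a) x), 1:])"
    by (simp add: case_prod_beta')
  have fin: "finite ({1..s} \<times> (UNIV::'k set))" by simp
  have "map_poly \<phi> P dvd R_poly CARD('k) s \<alpha>'" using map_poly_dvd[OF hphi PR] R by simp
  moreover have "degree (map_poly \<phi> P) > 0" using irr_deg_pos[OF irr] by (simp add: degree_map_poly_hom[OF hphi])
  ultimately obtain ia where ia: "ia \<in> {1..s} \<times> (UNIV::'k set)"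
    and rt: "poly (map_poly \<phi> P) ((\<lambda>(i, a). th i + \<phi> a) ia) = 0"
    unfolding Rsplit using root_of_dvd_prod[OF fin] by blast
  obtain i a0 where ia': "ia = (i, a0)" by (cases ia)
  define \<theta> where "\<theta> = th i + \<phi> a0"
  define m where "m = j + i"
  define \<beta> where "\<beta> = \<alpha> ^ (CARD('k) ^ m)"
  have root: "poly (map_poly \<phi> P) \<theta> = 0" using rt ia' by (simp add: \<theta>_def)
  have tb: "\<theta> ^ CARD('k) - \<theta> = \<beta>"
  proof -
    have "\<theta> ^ CARD('k) = th i ^ CARD('k) + \<phi> a0" unfolding \<theta>_def using frobL_add phi_frob[of a0 1] by simp
    then show ?thesis using th[of i] by (simp add: \<theta>_def \<beta>_def m_def j pow_pow)
  qed
  have bdist: "\<beta> ^ (CARD('k) ^ t) \<noteq> \<beta>" if "0 < t" "t < s" for t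
    unfolding \<beta>_def using distm that by blast
  have tdist: "\<theta> ^ (CARD('k) ^ t) \<noteq> \<theta>" if t: "0 < t" "t < s" for t
  proof
    assume e: "\<theta> ^ (CARD('k) ^ t) = \<theta>"
    have "\<beta> ^ (CARD('k) ^ t) = \<theta> ^ (CARD('k) ^ Suc t) - \<theta> ^ (CARD('k) ^ t)"
      unfolding tb[symmetric] by (rule alpha_pow)
    also have "\<theta> ^ (CARD('k) ^ Suc t) = \<theta> ^ CARD('k)"
      using pow_pow[of \<theta> t 1] e by simp
    finally show False using e tb bdist[OF t] by simp
  qed
  have deg: "degree P = s" by (rule degree_from_conj[OF irr root powL tdist s1[unfolded One_nat_def Suc_le_eq]])
  have fac: "map_poly \<phi> P = (\<Prod>i<s. [:- (\<theta> ^ (CARD('k) ^ i)), 1:])"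
    using P_factor(1)[OF irr mon root] deg by simp
  have nf: "non_fixed P" unfolding non_fixed_def
  proof (intro allI impI)
    fix a assume pa: "pcompose P [:a, 1:] = P"
    have "poly (map_poly \<phi> P) (\<phi> a + \<theta>) = 0"
      using poly_pcompose_shift[of P a \<theta>] pa root by simp
    then obtain t where t: "t < s" "\<phi> a + \<theta> = \<theta> ^ (CARD('k) ^ t)"
      unfolding fac poly_prod by (auto simp: prod_zero_iff)
    have "\<beta> ^ (CARD('k) ^ t) = (\<theta> ^ (CARD('k) ^ t)) ^ CARD('k) - \<theta> ^ (CARD('k) ^ t)"
      unfolding tb[symmetric] alpha_pow using pow_pow[of \<theta> t 1] by simp
    also have "\<dots> = \<beta>"
      unfolding t(2)[symmetric] using frobL_add[of "\<phi> a" \<theta>] phi_frob[of a 1] tb by simp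
    finally have "t = 0" using bdist t(1) by (metis neq0_conv)
    then have "\<phi> a = 0" using t by simp
    then show "a = 0" using hom_eq0_iff[OF hphi] by simp
  qed
  have "poly (Gpoly CARD('k) \<beta>) \<theta> = 0" using tb by (simp add: poly_Gpoly)
  then have "poly (Fseq CARD('k) (s - 1)) \<theta> = 0" using Gdm[of m] unfolding \<beta>_def
    by (auto simp: dvd_def)
  then have "P ^ 2 dvd carlitz CARD('k) (P - 1) 1" using wieferich_iff[OF irr mon deg root] by simp
  then have "c_wieferich P" using mon irr by (simp add: c_wieferich_def)
  then show ?thesis using nf deg by simp
qed

end


theorem theorem3p4:
  fixes \<phi> :: "'k::{finite,field} \<Rightarrow> 'L::{finite,field}" and s :: nat
  assumes "CARD('k) \<ge> 3"
    and "s \<ge> 1"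
    and "CARD('L) = CARD('k) ^ s"
    and "is_field_hom \<phi>"
  shows "{P :: 'k poly. c_wieferich P \<and> non_fixed P \<and> degree P = s} =
         {P :: 'k poly. lead_coeff P = 1 \<and> irreducible P \<and>
            (\<exists>C \<in> B_set \<phi> s. \<exists>\<alpha> \<in> C. \<exists>R :: 'k poly.
               map_poly \<phi> R = R_poly CARD('k) s \<alpha> \<and> P dvd R)}"
proof -
  have f: "\<phi> 1 = 1" "\<And>x y. \<phi> (x + y) = \<phi> x + \<phi> y" "\<And>x y. \<phi> (x * y) = \<phi> x * \<phi> y"
    using assms(4) unfolding is_field_hom_def by blast+
  have "\<phi> 0 = \<phi> 0 + \<phi> 0" using f(2)[of 0 0] by (simp only: add_0)
  then have "\<phi> 0 = 0" by (simp only: add_cancel_right_right)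
  then have "hom \<phi>" unfolding hom_def using f by blast
  then interpret ctx \<phi> s using assms(2,3) by unfold_locales
  show ?thesis
  proof (rule set_eqI, rule iffI)
    fix P assume "P \<in> {P :: 'k poly. c_wieferich P \<and> non_fixed P \<and> degree P = s}"
    then show "P \<in> {P :: 'k poly. lead_coeff P = 1 \<and> irreducible P \<and>
            (\<exists>C \<in> B_set \<phi> s. \<exists>\<alpha> \<in> C. \<exists>R :: 'k poly.
               map_poly \<phi> R = R_poly CARD('k) s \<alpha> \<and> P dvd R)}"
      using lhs_sub[of P] by (simp only: mem_Collect_eq)
  next
    fix P assume "P \<in> {P :: 'k poly. lead_coeff P = 1 \<and> irreducible P \<and>
            (\<exists>C \<in> B_set \<phi> s. \<exists>\<alpha> \<in> C. \<exists>R :: 'k poly.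
               map_poly \<phi> R = R_poly CARD('k) s \<alpha> \<and> P dvd R)}"
    then show "P \<in> {P :: 'k poly. c_wieferich P \<and> non_fixed P \<and> degree P = s}"
    proof -
      from \<open>P \<in> _\<close> obtain C \<alpha> R where "lead_coeff P = 1" "irreducible P" "C \<in> B_set \<phi> s"
        "\<alpha> \<in> C" "map_poly \<phi> R = R_poly CARD('k) s \<alpha>" "P dvd R" by (simp only: mem_Collect_eq) blast
      then have "c_wieferich P \<and> non_fixed P \<and> degree P = s" by (rule rhs_sub)
      then show ?thesis by (simp only: mem_Collect_eq)
    qed
  qed
qed


end
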